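(* In the D-RR setting under the strongly convex assumptions, let $\alpha_t=\alpha$ for all $t$, where $\alpha>0$ satisfies $$\alpha\le\min\Big\{\sqrt{\frac{2-\rho_w^2}{24\rho_w^2(5-\rho_w^2)}}\frac{1-\rho_w^2}{L},\ \frac{1-\rho_w^2}{2\mu},\ \frac{(1-\rho_w^2)\mu}{8\sqrt{30}L^2}\Big\}$$ (first term $=+\infty$ if $\rho_w=0$). Then for all $t\ge0$, $$\frac1n\sum_{i=1}^n\mathbb{E}\|x_{i,t}^0-x^*\|^2\le\Big(1-\frac{\alpha\mu}{4}\Big)^{mt}H_0+\frac{4\alpha^2}{\mu}\Big(mL+\frac{240\rho_w^2L^2}{\mu(1-\rho_w^2)^2}\Big)\sigma_*^2+\Big(\frac{1+\rho_w^2}{2}\Big)^{mt}\frac{\|\mathbf x_0^0-\mathbf 1(\bar x_0^0)^\intercal\|^2}{n}+\frac{4\hat X_1}{n(1-\rho_w^2)^2}\alpha^2 .$$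
   Context: D-RR setting. Let $n,m,p\ge1$ be integers and $[k]=\{1,\dots,k\}$. For $i\in[n]$, $\ell\in[m]$ let $f_{i,\ell}:\mathbb{R}^p\to\mathbb{R}$ be differentiable; $f_i:=\frac1m\sum_{\ell=1}^m f_{i,\ell}$, $f:=\frac1n\sum_{i=1}^n f_i$. Let $W=(w_{ij})\in\mathbb{R}^{n\times n}$ be nonnegative, symmetric, with $W\mathbf 1=\mathbf 1$, compliant with an undirected connected graph on $[n]$ (for $i\ne j$, $w_{ij}>0$ iff $\{i,j\}$ is an edge); $\rho_w$ is the spectral norm of $W-\frac1n\mathbf 1\mathbf 1^\intercal$ (so $\rho_w<1$). The D-RR algorithm: given deterministic initial points $x_{i,0}\in\mathbb{R}^p$ and stepsizes $\alpha_t>0$, at each epoch $t=0,1,\dots$ each agent $i$ draws a permutation $(\pi^i_0,\dots,\pi^i_{m-1})$ of $[m]$ uniformly at random, independently across agents and epochs; sets $x^0_{i,t}=x_{i,t}$; for $\ell=0,\dots,m-1$ sets $x^{\ell+1}_{i,t}=\sum_{j=1}^n w_{ij}\big(x^\ell_{j,t}-\alpha_t\nabla f_{j,\pi^j_\ell}(x^\ell_{j,t})\big)$; sets $x_{i,t+1}=x^m_{i,t}$. Notation: $\mathbf{x}_t^\ell\in\mathbb{R}^{n\times p}$ has $i$-th row $(x^\ell_{i,t})^\intercal$; $\bar x_t^\ell=\frac1n\sum_i x^\ell_{i,t}$; $\mathbf 1(\bar x_t^\ell)^\intercal$ is the $n\times p$ matrix all of whose rows equal $(\bar x_t^\ell)^\intercal$;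 $\|\cdot\|$ is Euclidean/Frobenius norm; $\mathbb{E}$ is expectation over all permutations. Strongly convex assumptions: each $f_{i,\ell}$ is $\mu$-strongly convex with $L$-Lipschitz gradient ($0<\mu\le L$); $x^*$ is the unique minimizer of $f$; $\sigma_*^2:=\frac{1}{mn}\sum_{i,\ell}\|\nabla f_{i,\ell}(x^* )\|^2$. $\omega:=\frac{16\alpha L^2}{n\mu(1-\rho_w^2)}$, $H_0:=\|\bar x_0^0-x^*\|^2+\omega\|\mathbf x_0^0-\mathbf 1(\bar x_0^0)^\intercal\|^2$, $\hat X_0:=H_0+\frac{28(m\mu+L)\sigma_*^2}{\mu L^2}$, $\hat X_1:=\frac{30nL^2}{1-\rho_w^2}\hat X_0+\frac{15n\rho_w^2}{1-\rho_w^2}\sigma_*^2+\frac{mn\mu(1-\rho_w^2)}{8L}\sigma_*^2$. *)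

theory Defs
  imports "HOL-Analysis.Analysis"
begin

definition strongly_convex :: "real \<Rightarrow> ('a::real_inner \<Rightarrow> real) \<Rightarrow> bool" where
  "strongly_convex \<mu> f \<longleftrightarrow> convex_on UNIV (\<lambda>x. f x - \<mu> / 2 * (norm x)^2)"

(* Spectral norm of W - (1/n) 1 1^T, agents indexed by the finite type 'n, n = CARD('n) *)
definition rho_w :: "real^'n::finite^'n \<Rightarrow> real" where
  "rho_w W = onorm (\<lambda>v. (W - (\<chi> i j. 1 / real CARD('n))) *v v)"

definition mixing_graph_connected :: "real^'n::finite^'n \<Rightarrow> bool" where
  "mixing_graph_connected W \<longleftrightarrow>
     (\<forall>i j. (\<lambda>a b. a \<noteq> b \<and> W$a$b > 0)\<^sup>*\<^sup>* i j)"

(* Inner loop of one D-RR epoch: l steps starting from X, with permutations pi (agent => position => index) *)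
fun drr_inner :: "real^'n::finite^'n \<Rightarrow> real \<Rightarrow> ('n \<Rightarrow> nat \<Rightarrow> 'a::real_vector \<Rightarrow> 'a)
     \<Rightarrow> ('n \<Rightarrow> nat \<Rightarrow> nat) \<Rightarrow> ('n \<Rightarrow> 'a) \<Rightarrow> nat \<Rightarrow> ('n \<Rightarrow> 'a)" where
  "drr_inner W \<alpha> g \<pi> X 0 = X"
| "drr_inner W \<alpha> g \<pi> X (Suc l) =
     (let Y = drr_inner W \<alpha> g \<pi> X l in
      (\<lambda>i. \<Sum>j\<in>UNIV. (W$i$j) *\<^sub>R (Y j - \<alpha> *\<^sub>R g j (\<pi> j l) (Y j))))"

(* Outer iterates x_t = x_t^0, with sigma t i the permutation of agent i at epoch t *)
fun drr_iter :: "real^'n::finite^'n \<Rightarrow> real \<Rightarrow> ('n \<Rightarrow> nat \<Rightarrow> 'a::real_vector \<Rightarrow> 'a) \<Rightarrow> nat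
     \<Rightarrow> (nat \<Rightarrow> 'n \<Rightarrow> nat \<Rightarrow> nat) \<Rightarrow> ('n \<Rightarrow> 'a) \<Rightarrow> nat \<Rightarrow> ('n \<Rightarrow> 'a)" where
  "drr_iter W \<alpha> g m \<sigma> x0 0 = x0"
| "drr_iter W \<alpha> g m \<sigma> x0 (Suc t) = drr_inner W \<alpha> g (\<sigma> t) (drr_iter W \<alpha> g m \<sigma> x0 t) m"

(* All permutation choices for epochs < t (canonically id elsewhere); uniform distribution on this
   finite set = independent uniform permutations across agents and epochs *)
definition schedules :: "nat \<Rightarrow> nat \<Rightarrow> (nat \<Rightarrow> 'n::finite \<Rightarrow> nat \<Rightarrow> nat) set" where
  "schedules m t = {\<sigma>. \<forall>e i. (e < t \<longrightarrow> \<sigma> e i permutes {..<m}) \<and> (\<not> e < t \<longrightarrow> \<sigma> e i = id)}"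

definition expect_sched :: "nat \<Rightarrow> nat \<Rightarrow> ((nat \<Rightarrow> 'n::finite \<Rightarrow> nat \<Rightarrow> nat) \<Rightarrow> real) \<Rightarrow> real" where
  "expect_sched m t h = (\<Sum>\<sigma>\<in>(schedules m t :: (nat \<Rightarrow> 'n \<Rightarrow> nat \<Rightarrow> nat) set). h \<sigma>) / real (card (schedules m t :: (nat \<Rightarrow> 'n \<Rightarrow> nat \<Rightarrow> nat) set))"

definition avg_pt :: "('n::finite \<Rightarrow> 'a::real_vector) \<Rightarrow> 'a" where
  "avg_pt X = (1 / real CARD('n)) *\<^sub>R (\<Sum>i\<in>UNIV. X i)"

definition consensus_err :: "('n::finite \<Rightarrow> 'a::real_normed_vector) \<Rightarrow> real" where
  "consensus_err X = (\<Sum>i\<in>UNIV. (norm (X i - avg_pt X))^2)"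

end

theory Submission imports Defs begin


lemma sum_sub_avg: "(\<Sum>i\<in>UNIV. X i - avg_pt (X::'n::finite \<Rightarrow> 'a::real_vector)) = 0"
proof -
  have "(\<Sum>i\<in>UNIV. X i - avg_pt X) = (\<Sum>i\<in>UNIV. X i) - real CARD('n) *\<^sub>R avg_pt X"
    by (simp add: sum_subtractf sum_constant_scaleR)
  also have "\<dots> = 0" unfolding avg_pt_def by simp
  finally show ?thesis .
qed

lemma norm_add_sq: "(norm (u + v))^2 = (norm u)^2 + 2 * (u \<bullet> v) + (norm (v::'a::real_inner))^2"
  by (simp add: power2_norm_eq_inner inner_add_left inner_add_right inner_commute)

lemma norm_diff_sq: "(norm (u - v))^2 = (norm u)^2 - 2 * (u \<bullet> v) + (norm (v::'a::real_inner))^2"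
  by (simp add: power2_norm_eq_inner inner_diff_left inner_diff_right inner_commute)

lemma avg_decomp:
  fixes X :: "'n::finite \<Rightarrow> 'a::real_inner"
  shows "(\<Sum>i\<in>UNIV. (norm (X i - y))^2) = real CARD('n) * (norm (avg_pt X - y))^2 + consensus_err X"
proof -
  let ?a = "avg_pt X"
  have "(\<Sum>i\<in>UNIV. (norm (X i - y))^2) = (\<Sum>i\<in>UNIV. (norm (X i - ?a))^2 + 2 * ((X i - ?a) \<bullet> (?a - y)) + (norm (?a - y))^2)"
  proof (rule sum.cong)
    fix i
    have "X i - y = (X i - ?a) + (?a - y)" by simp
    then show "(norm (X i - y))^2 = (norm (X i - ?a))^2 + 2 * ((X i - ?a) \<bullet> (?a - y)) + (norm (?a - y))^2"
      using norm_add_sq[of "X i - ?a" "?a - y"] by simp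
  qed simp
  also have "\<dots> = consensus_err X + 2 * ((\<Sum>i\<in>UNIV. X i - ?a) \<bullet> (?a - y)) + real CARD('n) * (norm (?a - y))^2"
    by (simp add: sum.distrib consensus_err_def sum_distrib_left inner_sum_left)
  also have "\<dots> = real CARD('n) * (norm (avg_pt X - y))^2 + consensus_err X"
    by (simp add: sum_sub_avg)
  finally show ?thesis .
qed

lemma cons_le_sumsq:
  fixes X :: "'n::finite \<Rightarrow> 'a::real_inner"
  shows "consensus_err X \<le> (\<Sum>i\<in>UNIV. (norm (X i))^2)"
  using avg_decomp[of X 0] by simp

lemma consensus_err_nonneg: "consensus_err X \<ge> 0"
  unfolding consensus_err_def by (simp add: sum_nonneg)

lemma norm_sum_sq:
  fixes v :: "'i \<Rightarrow> 'a::real_inner"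
  assumes "finite A"
  shows "(norm (\<Sum>j\<in>A. v j))^2 \<le> real (card A) * (\<Sum>j\<in>A. (norm (v j))^2)"
proof -
  have "norm (\<Sum>j\<in>A. v j) \<le> (\<Sum>j\<in>A. norm (v j))" by (rule norm_sum)
  then have "(norm (\<Sum>j\<in>A. v j))^2 \<le> (\<Sum>j\<in>A. norm (v j))^2"
    by (simp add: power_mono)
  also have "\<dots> = (\<Sum>j\<in>A. 1 * norm (v j))^2" by simp
  also have "\<dots> \<le> (\<Sum>j\<in>A. 1^2) * (\<Sum>j\<in>A. (norm (v j))^2)"
    by (rule Cauchy_Schwarz_ineq_sum)
  finally show ?thesis by simp
qed

lemma avg_norm_sq:
  fixes v :: "'n::finite \<Rightarrow> 'a::real_inner"
  shows "(norm ((1 / real CARD('n)) *\<^sub>R (\<Sum>j\<in>UNIV. v j)))^2 \<le> (1 / real CARD('n)) * (\<Sum>j\<in>UNIV. (norm (v j))^2)"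
proof -
  have n: "real CARD('n) > 0" by simp
  have "(norm ((1 / real CARD('n)) *\<^sub>R (\<Sum>j\<in>UNIV. v j)))^2 = (1 / real CARD('n))^2 * (norm (\<Sum>j\<in>UNIV. v j))^2"
    by (simp add: power_divide)
  also have "\<dots> \<le> (1 / real CARD('n))^2 * (real CARD('n) * (\<Sum>j\<in>UNIV. (norm (v j))^2))"
    using norm_sum_sq[of UNIV v] by (intro mult_left_mono) auto
  also have "\<dots> = (1 / real CARD('n)) * (\<Sum>j\<in>UNIV. (norm (v j))^2)"
    using n by (simp add: power2_eq_square field_simps)
  finally show ?thesis .
qed

lemma mix_avg:
  fixes W :: "real^'n::finite^'n" and Y :: "'n \<Rightarrow> 'a::real_vector"
  assumes W_sym: "\<And>i j. W$i$j = W$j$i" and W_stoch: "\<And>i. (\<Sum>j\<in>UNIV. W$i$j) = 1"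
  shows "avg_pt (\<lambda>i. \<Sum>j\<in>UNIV. W$i$j *\<^sub>R Y j) = avg_pt Y"
proof -
  have "(\<Sum>i\<in>UNIV. \<Sum>j\<in>UNIV. W$i$j *\<^sub>R Y j) = (\<Sum>j\<in>UNIV. (\<Sum>i\<in>UNIV. W$i$j) *\<^sub>R Y j)"
    by (subst sum.swap) (simp add: scaleR_sum_left)
  also have "\<dots> = (\<Sum>j\<in>UNIV. Y j)"
  proof (rule sum.cong)
    fix j
    have "(\<Sum>i\<in>UNIV. W$i$j) = (\<Sum>i\<in>UNIV. W$j$i)" using W_sym by simp
    then show "(\<Sum>i\<in>UNIV. W$i$j) *\<^sub>R Y j = Y j" using W_stoch by simp
  qed simp
  finally show ?thesis unfolding avg_pt_def by simp
qed

lemma norm_sq_basis: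
  fixes x :: "'a::euclidean_space"
  shows "(norm x)^2 = (\<Sum>b\<in>Basis. (x \<bullet> b)^2)"
  unfolding power2_norm_eq_inner by (subst euclidean_inner) (simp add: power2_eq_square)

lemma norm_sq_vec:
  fixes v :: "real^'n::finite"
  shows "(norm v)^2 = (\<Sum>i\<in>UNIV. (v$i)^2)"
  unfolding power2_norm_eq_inner inner_vec_def by (simp add: power2_eq_square)

lemma mix_cons:
  fixes W :: "real^'n::finite^'n" and Y :: "'n \<Rightarrow> 'a::euclidean_space"
  assumes W_sym: "\<And>i j. W$i$j = W$j$i" and W_stoch: "\<And>i. (\<Sum>j\<in>UNIV. W$i$j) = 1"
  shows "consensus_err (\<lambda>i. \<Sum>j\<in>UNIV. W$i$j *\<^sub>R Y j) \<le> (rho_w W)^2 * consensus_err Y"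
proof -
  define n where "n = real CARD('n)"
  have n: "n > 0" unfolding n_def by simp
  define a where "a = avg_pt Y"
  define Z where "Z = (\<lambda>i. \<Sum>j\<in>UNIV. W$i$j *\<^sub>R Y j)"
  define M where "M = W - (\<chi> i j. 1 / real CARD('n))"
  have avgZ: "avg_pt Z = a" unfolding Z_def a_def by (rule mix_avg[OF W_sym W_stoch])
  have Zi: "Z i - a = (\<Sum>j\<in>UNIV. (M$i$j) *\<^sub>R (Y j - a))" for i
  proof -
    have "(\<Sum>j\<in>UNIV. (M$i$j) *\<^sub>R (Y j - a)) = (\<Sum>j\<in>UNIV. W$i$j *\<^sub>R (Y j - a)) - (\<Sum>j\<in>UNIV. (1 / n) *\<^sub>R (Y j - a))"
      unfolding M_def n_def by (simp add: scaleR_diff_left sum_subtractf)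
    also have "(\<Sum>j\<in>UNIV. (1 / n) *\<^sub>R (Y j - a)) = (1 / n) *\<^sub>R (\<Sum>j\<in>UNIV. Y j - a)"
      by (rule scaleR_sum_right[symmetric])
    also have "(\<Sum>j\<in>UNIV. Y j - a) = 0" unfolding a_def by (rule sum_sub_avg)
    also have "(\<Sum>j\<in>UNIV. W$i$j *\<^sub>R (Y j - a)) = Z i - (\<Sum>j\<in>UNIV. W$i$j) *\<^sub>R a"
      unfolding Z_def by (simp add: scaleR_diff_right sum_subtractf scaleR_sum_left)
    finally show ?thesis using W_stoch by simp
  qed
  define v where "v = (\<lambda>b. \<chi> j. (Y j - a) \<bullet> b)"
  have comp: "(M *v v b)$i = (Z i - a) \<bullet> b" for b i
    unfolding Zi v_def by (simp add: matrix_vector_mult_def inner_sum_left)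
  have "consensus_err Z = (\<Sum>i\<in>UNIV. \<Sum>b\<in>Basis. ((Z i - a) \<bullet> b)^2)"
    unfolding consensus_err_def avgZ by (simp add: norm_sq_basis)
  also have "\<dots> = (\<Sum>b\<in>Basis. (norm (M *v v b))^2)"
    by (subst sum.swap) (simp add: norm_sq_vec comp)
  also have "\<dots> \<le> (\<Sum>b\<in>Basis. (rho_w W)^2 * (norm (v b))^2)"
  proof (rule sum_mono)
    fix b :: 'a
    have "norm (M *v v b) \<le> rho_w W * norm (v b)"
      unfolding rho_w_def M_def by (rule onorm) simp
    then show "(norm (M *v v b))^2 \<le> (rho_w W)^2 * (norm (v b))^2"
      by (metis norm_ge_zero power_mono power_mult_distrib)
  qed
  also have "\<dots> = (rho_w W)^2 * (\<Sum>j\<in>UNIV. \<Sum>b\<in>Basis. ((Y j - a) \<bullet> b)^2)"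
    by (simp add: sum_distrib_left[symmetric] norm_sq_vec v_def) (subst sum.swap, simp)
  also have "\<dots> = (rho_w W)^2 * consensus_err Y"
    unfolding consensus_err_def a_def by (simp add: norm_sq_basis)
  finally show ?thesis unfolding Z_def .
qed


lemma line_deriv:
  fixes f :: "'a::real_inner \<Rightarrow> real"
  assumes "(f has_derivative (\<lambda>h. G \<bullet> h)) (at (x + t *\<^sub>R d))"
  shows "((\<lambda>s. f (x + s *\<^sub>R d)) has_field_derivative (G \<bullet> d)) (at t)"
proof -
  have l: "((\<lambda>s. x + s *\<^sub>R d) has_derivative (\<lambda>s. s *\<^sub>R d)) (at t)"
    by (auto intro!: derivative_eq_intros)
  have "((\<lambda>s. f (x + s *\<^sub>R d)) has_derivative (\<lambda>s. G \<bullet> (s *\<^sub>R d))) (at t)"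
    using has_derivative_compose[OF l assms] by (simp add: o_def)
  then show ?thesis
    by (rule has_derivative_imp_has_field_derivative) (simp add: algebra_simps)
qed

lemma sc_lower:
  fixes f :: "'a::real_inner \<Rightarrow> real"
  assumes der: "\<And>z. (f has_derivative (\<lambda>h. g z \<bullet> h)) (at z)"
    and sc: "strongly_convex \<mu> f"
  shows "f y \<ge> f x + g x \<bullet> (y - x) + \<mu> / 2 * (norm (y - x))^2"
proof -
  define h where "h = (\<lambda>z. f z - \<mu> / 2 * (norm z)^2)"
  define d where "d = y - x"
  define \<phi> where "\<phi> = (\<lambda>t::real. h (x + t *\<^sub>R d))"
  have ch: "convex_on UNIV h" using sc unfolding strongly_convex_def h_def by simp
  have cphi: "convex_on UNIV \<phi>"
  proof (rule convex_onI)
    fix u a b :: real assume u: "0 < u" "u < 1"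
    have "x + ((1 - u) *\<^sub>R a + u *\<^sub>R b) *\<^sub>R d = (1 - u) *\<^sub>R (x + a *\<^sub>R d) + u *\<^sub>R (x + b *\<^sub>R d)"
      by (simp add: algebra_simps)
    then show "\<phi> ((1 - u) *\<^sub>R a + u *\<^sub>R b) \<le> (1 - u) * \<phi> a + u * \<phi> b"
      unfolding \<phi>_def using convex_onD[OF ch, of u] u by simp
  qed simp
  have hder: "(h has_derivative (\<lambda>k. (g z - \<mu> *\<^sub>R z) \<bullet> k)) (at z)" for z
  proof -
    have h2: "h = (\<lambda>z. f z - \<mu> / 2 * (z \<bullet> z))"
      unfolding h_def by (simp add: power2_norm_eq_inner)
    have "((\<lambda>z. f z - \<mu> / 2 * (z \<bullet> z)) has_derivative (\<lambda>k. g z \<bullet> k - \<mu> / 2 * (z \<bullet> k + k \<bullet> z))) (at z)"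
      by (auto intro!: derivative_eq_intros der)
    then show ?thesis unfolding h2
      by (rule has_derivative_eq_rhs) (auto simp: fun_eq_iff inner_diff_left inner_commute algebra_simps)
  qed
  have pd: "(\<phi> has_field_derivative ((g x - \<mu> *\<^sub>R x) \<bullet> d)) (at 0)"
    unfolding \<phi>_def by (rule line_deriv) (use hder in simp)
  have "\<phi> 1 - \<phi> 0 \<ge> ((g x - \<mu> *\<^sub>R x) \<bullet> d) * (1 - 0)"
    by (rule convex_on_imp_above_tangent[OF cphi]) (auto intro: has_field_derivative_at_within[OF pd])
  then have "h y - h x \<ge> (g x - \<mu> *\<^sub>R x) \<bullet> d" unfolding \<phi>_def d_def by simp
  moreover have "(norm y)^2 = (norm x)^2 + 2 * (x \<bullet> d) + (norm d)^2"
    unfolding d_def by (simp add: power2_norm_eq_inner inner_diff_left inner_diff_right inner_commute)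
  ultimately show ?thesis unfolding h_def d_def
    by (simp add: inner_diff_left algebra_simps)
qed

lemma smooth_upper:
  fixes f :: "'a::real_inner \<Rightarrow> real"
  assumes der: "\<And>z. (f has_derivative (\<lambda>h. g z \<bullet> h)) (at z)"
    and lip: "L-lipschitz_on UNIV g"
  shows "f y \<le> f x + g x \<bullet> (y - x) + L / 2 * (norm (y - x))^2"
proof -
  define d where "d = y - x"
  define \<psi> where "\<psi> = (\<lambda>t. f (x + t *\<^sub>R d) - t * (g x \<bullet> d) - L / 2 * t^2 * (norm d)^2)"
  have "\<psi> 0 \<ge> \<psi> 1"
  proof (rule DERIV_nonpos_imp_nonincreasing[of 0 1 \<psi>])
    fix t :: real assume t: "0 \<le> t" "t \<le> 1"
    have D: "(\<psi> has_field_derivative (g (x + t *\<^sub>R d) \<bullet> d - g x \<bullet> d - L * t * (norm d)^2)) (at t)"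
      unfolding \<psi>_def
      by (rule derivative_eq_intros line_deriv der refl | simp)+
    have "g (x + t *\<^sub>R d) \<bullet> d - g x \<bullet> d = (g (x + t *\<^sub>R d) - g x) \<bullet> d" by (simp add: inner_diff_left)
    also have "\<dots> \<le> norm (g (x + t *\<^sub>R d) - g x) * norm d" by (rule norm_cauchy_schwarz)
    also have "\<dots> \<le> (L * norm (t *\<^sub>R d)) * norm d"
      using lipschitz_on_normD[OF lip, of "x + t *\<^sub>R d" x] by (intro mult_right_mono) auto
    also have "\<dots> = L * t * (norm d)^2" using t by (simp add: power2_eq_square)
    finally have le: "g (x + t *\<^sub>R d) \<bullet> d - g x \<bullet> d \<le> L * t * (norm d)^2" .
    show "\<exists>y. (\<psi> has_field_derivative y) (at t) \<and> y \<le> 0"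
      using D le by (intro exI[of _ "g (x + t *\<^sub>R d) \<bullet> d - g x \<bullet> d - L * t * (norm d)^2"]) auto
  qed simp
  then show ?thesis unfolding \<psi>_def d_def by simp
qed


lemma young_LUV:
  fixes \<mu> L u v :: real
  assumes "\<mu> > 0"
  shows "L * u * v \<le> \<mu> / 4 * u^2 + L^2 / \<mu> * v^2"
proof -
  have eq: "\<mu> / 4 * u^2 + L^2 / \<mu> * v^2 - L * u * v = (\<mu> * u / 2 - L * v)^2 / \<mu>"
    using assms by (simp add: power2_eq_square field_simps)
  have "0 \<le> (\<mu> * u / 2 - L * v)^2 / \<mu>" using assms by simp
  then show ?thesis using eq by linarith
qed

lemma pt_ineq:
  fixes F :: "'a::real_inner \<Rightarrow> real"
  assumes der: "\<And>z. (F has_derivative (\<lambda>h. G z \<bullet> h)) (at z)"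
    and sc: "strongly_convex \<mu> F" and lip: "L-lipschitz_on UNIV G" and mu: "\<mu> > 0"
  shows "(G x - G xs) \<bullet> (a - ys) \<ge> \<mu> / 2 * (norm (x - ys))^2 + \<mu> / 4 * (norm (x - xs))^2
           - L / 2 * (norm (ys - xs))^2 - L^2 / \<mu> * (norm (a - x))^2"
proof -
  have tp: "(G x - G xs) \<bullet> (x - ys) = (F ys - F x - G x \<bullet> (ys - x)) + (F x - F xs - G xs \<bullet> (x - xs))
              - (F ys - F xs - G xs \<bullet> (ys - xs))"
    by (simp add: inner_diff_left inner_diff_right)
  have d1: "F ys - F x - G x \<bullet> (ys - x) \<ge> \<mu> / 2 * (norm (ys - x))^2"
    using sc_lower[OF der sc, where y=ys and x=x] by simp
  have d2: "F x - F xs - G xs \<bullet> (x - xs) \<ge> \<mu> / 2 * (norm (x - xs))^2"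
    using sc_lower[OF der sc, where y=x and x=xs] by simp
  have d3: "F ys - F xs - G xs \<bullet> (ys - xs) \<le> L / 2 * (norm (ys - xs))^2"
    using smooth_upper[OF der lip, where y=ys and x=xs] by simp
  have "- ((G x - G xs) \<bullet> (a - x)) \<le> norm (G x - G xs) * norm (a - x)"
    using norm_cauchy_schwarz[of "-(G x - G xs)" "a - x"] by (simp only: inner_minus_left norm_minus_cancel)
  also have "\<dots> \<le> L * norm (x - xs) * norm (a - x)"
    using lipschitz_on_normD[OF lip, of x xs] by (intro mult_right_mono) auto
  also have "\<dots> \<le> \<mu> / 4 * (norm (x - xs))^2 + L^2 / \<mu> * (norm (a - x))^2"
    by (rule young_LUV[OF mu])
  finally have c: "(G x - G xs) \<bullet> (a - x) \<ge> - (\<mu> / 4 * (norm (x - xs))^2 + L^2 / \<mu> * (norm (a - x))^2)" by simp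
  have sp: "(G x - G xs) \<bullet> (a - ys) = (G x - G xs) \<bullet> (x - ys) + (G x - G xs) \<bullet> (a - x)"
    by (simp add: inner_diff_right)
  have nx: "norm (ys - x) = norm (x - ys)" by (rule norm_minus_commute)
  have half: "\<mu> / 2 * (norm (x - xs))^2 = \<mu> / 4 * (norm (x - xs))^2 + \<mu> / 4 * (norm (x - xs))^2" by simp
  have d1': "F ys - F x - G x \<bullet> (ys - x) \<ge> \<mu> / 2 * (norm (x - ys))^2" using d1 nx by simp
  show ?thesis using tp d1' d2 d3 c sp half by linarith
qed


definition Perm :: "nat \<Rightarrow> (nat \<Rightarrow> nat) set" where "Perm m = {p. p permutes {..<m}}"

lemma Perm_finite: "finite (Perm m)" unfolding Perm_def by (rule finite_permutations) simp
lemma Perm_id: "id \<in> Perm m" unfolding Perm_def by (simp add: permutes_id)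
lemma Perm_card_pos: "card (Perm m) > 0" using Perm_finite Perm_id card_gt_0_iff by blast

lemma Perm_shift:
  assumes tau: "\<tau> permutes {..<m}"
  shows "(\<Sum>p\<in>Perm m. \<Phi> p) = (\<Sum>p\<in>Perm m. \<Phi> (\<tau> \<circ> p))"
proof -
  have bij: "bij_betw (\<lambda>p. \<tau> \<circ> p) (Perm m) (Perm m)"
  proof (rule bij_betwI[where g="\<lambda>p. inv \<tau> \<circ> p"])
    show "(\<lambda>p. \<tau> \<circ> p) \<in> Perm m \<rightarrow> Perm m" using tau by (auto simp: Perm_def permutes_compose)
    show "(\<lambda>p. inv \<tau> \<circ> p) \<in> Perm m \<rightarrow> Perm m" using permutes_inv[OF tau] by (auto simp: Perm_def permutes_compose)
    show "inv \<tau> \<circ> (\<tau> \<circ> p) = p" for p using permutes_inv_o[OF tau] by (simp add: o_assoc)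
    show "\<tau> \<circ> (inv \<tau> \<circ> p) = p" for p using permutes_inv_o[OF tau] by (simp add: o_assoc)
  qed
  show ?thesis using sum.reindex_bij_betw[OF bij, of \<Phi>] by simp
qed

lemma Perm_range: "p \<in> Perm m \<Longrightarrow> k < m \<Longrightarrow> p k < m"
  unfolding Perm_def using permutes_in_image by fastforce

lemma Perm_marginal:
  assumes l: "l < m"
  shows "(\<Sum>p\<in>Perm m. \<psi> (p l)) = real (card (Perm m)) / real m * (\<Sum>k<m. \<psi> k)"
proof -
  define G where "G a = (\<Sum>p\<in>Perm m. if p l = a then 1 else (0::real))" for a
  have Gc: "G a = G b" if ab: "a < m" "b < m" for a b
  proof -
    have tau: "Transposition.transpose a b permutes {..<m}" using ab by (intro permutes_swap_id) auto
    have "G a = (\<Sum>p\<in>Perm m. if (Transposition.transpose a b \<circ> p) l = a then 1 else (0::real))"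
      unfolding G_def by (rule Perm_shift[OF tau])
    also have "\<dots> = G b" unfolding G_def
      by (rule sum.cong) (auto simp: transpose_eq_iff)
    finally show ?thesis .
  qed
  have 1: "(\<Sum>p\<in>Perm m. \<psi> (p l)) = G 0 * (\<Sum>a<m. \<psi> a)" for \<psi> :: "nat \<Rightarrow> real"
  proof -
  have "(\<Sum>p\<in>Perm m. \<psi> (p l)) = (\<Sum>a<m. \<Sum>p\<in>{p\<in>Perm m. p l = a}. \<psi> (p l))"
    by (rule sum.group[symmetric]) (auto simp: Perm_finite Perm_range l)
  also have "\<dots> = (\<Sum>a<m. \<psi> a * G a)"
  proof (rule sum.cong)
    fix a
    have "(\<Sum>p\<in>{p\<in>Perm m. p l = a}. \<psi> (p l)) = (\<Sum>p\<in>{p\<in>Perm m. p l = a}. \<psi> a)" by simp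
    also have "\<dots> = \<psi> a * (\<Sum>p\<in>Perm m. if p l = a then 1 else (0::real))"
      by (simp add: sum.If_cases Perm_finite Int_def conj_commute)
    finally show "(\<Sum>p\<in>{p\<in>Perm m. p l = a}. \<psi> (p l)) = \<psi> a * G a" unfolding G_def .
  qed simp
  also have "\<dots> = (\<Sum>a<m. G 0 * \<psi> a)"
  proof (rule sum.cong)
    fix a assume "a \<in> {..<m}"
    then have "G a = G 0" using Gc l by blast
    then show "\<psi> a * G a = G 0 * \<psi> a" by simp
  qed simp
  also have "\<dots> = G 0 * (\<Sum>a<m. \<psi> a)"
    by (simp add: sum_distrib_left)
  finally show ?thesis .
  qed
  have "real (card (Perm m)) = (\<Sum>p\<in>Perm m. (\<lambda>_. 1::real) (p l))" by simp
  also have "\<dots> = G 0 * real m" using 1[of "\<lambda>_. 1"] by simp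
  finally have "G 0 = real (card (Perm m)) / real m" using l by (simp add: field_simps)
  then show ?thesis using 1 by simp
qed

lemma transp2:
  assumes "a < m" "b < m" "a' < m" "b' < m" "a \<noteq> b" "a' \<noteq> b'"
  shows "\<exists>\<tau>. \<tau> permutes {..<m} \<and> \<tau> a = a' \<and> \<tau> b = b'"
proof -
  define t1 where "t1 = Transposition.transpose a a'"
  define b1 where "b1 = t1 b"
  define t2 where "t2 = Transposition.transpose b1 b'"
  have p1: "t1 permutes {..<m}" unfolding t1_def using assms by (intro permutes_swap_id) auto
  have b1m: "b1 < m" unfolding b1_def t1_def using assms by (auto simp: Transposition.transpose_def)
  have p2: "t2 permutes {..<m}" unfolding t2_def using assms b1m by (intro permutes_swap_id) auto
  have b1a: "b1 \<noteq> a'" unfolding b1_def t1_def using assms by (auto simp: Transposition.transpose_def)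
  have "(t2 \<circ> t1) a = a'" unfolding t2_def t1_def using b1a assms
    by (auto simp: Transposition.transpose_def)
  moreover have "(t2 \<circ> t1) b = b'" unfolding t2_def using b1_def by simp
  moreover have "t2 \<circ> t1 permutes {..<m}" using p1 p2 by (rule permutes_compose)
  ultimately show ?thesis by blast
qed

lemma Perm_partial_sum:
  fixes c :: "nat \<Rightarrow> 'a::real_inner"
  assumes c0: "(\<Sum>a<m. c a) = 0" and lm: "l \<le> m"
  shows "(\<Sum>p\<in>Perm m. (norm (\<Sum>k<l. c (p k)))^2) \<le> real (card (Perm m)) * (\<Sum>a<m. (norm (c a))^2)"
proof -
  define I where "I p a = (if a \<in> p ` {..<l} then 1 else (0::real))" for p :: "nat \<Rightarrow> nat" and a
  define F where "F a b = (\<Sum>p\<in>Perm m. I p a * I p b)" for a b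
  have S: "(\<Sum>k<l. c (p k)) = (\<Sum>a<m. I p a *\<^sub>R c a)" if p: "p \<in> Perm m" for p
  proof -
    have "inj p" using p unfolding Perm_def by (simp add: permutes_inj)
    then have inj: "inj_on p {..<l}" by (rule inj_on_subset) simp
    have sub: "p ` {..<l} \<subseteq> {..<m}" using Perm_range[OF p] lm by auto
    have "(\<Sum>k<l. c (p k)) = (\<Sum>a\<in>p ` {..<l}. c a)" using sum.reindex[OF inj, of c] by simp
    also have "\<dots> = (\<Sum>a\<in>{..<m} \<inter> p ` {..<l}. c a)" using sub by (simp add: Int_absorb1)
    also have "\<dots> = (\<Sum>a<m. I p a *\<^sub>R c a)"
      unfolding I_def by (subst sum.inter_restrict) (auto intro!: sum.cong)
    finally show ?thesis .
  qed
  have N: "(norm (\<Sum>a<m. I p a *\<^sub>R c a))^2 = (\<Sum>a<m. \<Sum>b<m. I p a * I p b * (c a \<bullet> c b))" for p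
    unfolding power2_norm_eq_inner by (simp add: inner_sum_left inner_sum_right sum_distrib_left mult.assoc inner_commute mult.left_commute)
  have "(\<Sum>p\<in>Perm m. (norm (\<Sum>k<l. c (p k)))^2) = (\<Sum>p\<in>Perm m. \<Sum>a<m. \<Sum>b<m. I p a * I p b * (c a \<bullet> c b))"
    by (rule sum.cong) (simp_all add: S N)
  also have "\<dots> = (\<Sum>a<m. \<Sum>p\<in>Perm m. \<Sum>b<m. I p a * I p b * (c a \<bullet> c b))"
    by (rule sum.swap)
  also have "\<dots> = (\<Sum>a<m. \<Sum>b<m. \<Sum>p\<in>Perm m. I p a * I p b * (c a \<bullet> c b))"
    by (rule sum.cong[OF refl], rule sum.swap)
  also have "\<dots> = (\<Sum>a<m. \<Sum>b<m. F a b * (c a \<bullet> c b))"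
    unfolding F_def by (simp add: sum_distrib_right)
  finally have E1: "(\<Sum>p\<in>Perm m. (norm (\<Sum>k<l. c (p k)))^2) = (\<Sum>a<m. \<Sum>b<m. F a b * (c a \<bullet> c b))" .
  have Fsym: "F (\<tau> a) (\<tau> b) = F a b" if tau: "\<tau> permutes {..<m}" for \<tau> a b
  proof -
    have "F (\<tau> a) (\<tau> b) = (\<Sum>p\<in>Perm m. I (\<tau> \<circ> p) (\<tau> a) * I (\<tau> \<circ> p) (\<tau> b))"
      unfolding F_def by (rule Perm_shift[OF tau])
    also have "\<dots> = F a b" unfolding F_def
    proof (rule sum.cong)
      fix p
      have "I (\<tau> \<circ> p) (\<tau> x) = I p x" for x
      proof -
        have "(\<tau> x \<in> (\<tau> \<circ> p) ` {..<l}) = (x \<in> p ` {..<l})"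
          using inj_eq[OF permutes_inj[OF tau]] by auto
        then show ?thesis unfolding I_def by simp
      qed
      then show "I (\<tau> \<circ> p) (\<tau> a) * I (\<tau> \<circ> p) (\<tau> b) = I p a * I p b" by simp
    qed simp
    finally show ?thesis .
  qed
  define K where "K = F 0 1"
  have Foff: "F a b = K" if ab: "a < m" "b < m" "a \<noteq> b" for a b
  proof -
    have "0 < m" "1 < m" using ab by auto
    then have "\<exists>\<tau>. \<tau> permutes {..<m} \<and> \<tau> 0 = a \<and> \<tau> 1 = b"
      using transp2[of 0 m 1 a b] ab by auto
    then obtain \<tau> where "\<tau> permutes {..<m}" "\<tau> 0 = a" "\<tau> 1 = b" by blast
    then show ?thesis unfolding K_def using Fsym by metis
  qed
  have I01: "0 \<le> I p a" "I p a \<le> 1" for p a unfolding I_def by auto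
  have K0: "K \<ge> 0" unfolding K_def F_def using I01 by (intro sum_nonneg mult_nonneg_nonneg) auto
  have Fdiag: "F a a \<le> real (card (Perm m))" for a
  proof -
    have "F a a \<le> (\<Sum>p\<in>Perm m. 1)" unfolding F_def
      using I01 by (intro sum_mono) (metis mult_le_one)
    then show ?thesis by simp
  qed
  have "(\<Sum>a<m. \<Sum>b<m. F a b * (c a \<bullet> c b))
      = (\<Sum>a<m. \<Sum>b<m. (if a = b then (F a a - K) * (c a \<bullet> c b) else 0) + K * (c a \<bullet> c b))"
    by (intro sum.cong refl) (auto simp: Foff algebra_simps)
  also have "\<dots> = (\<Sum>a<m. (F a a - K) * (norm (c a))^2) + K * ((\<Sum>a<m. c a) \<bullet> (\<Sum>b<m. c b))"
    by (simp add: sum.distrib sum_distrib_left inner_sum_left inner_sum_right power2_norm_eq_inner inner_commute)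
  also have "\<dots> = (\<Sum>a<m. (F a a - K) * (norm (c a))^2)" using c0 by simp
  also have "\<dots> \<le> (\<Sum>a<m. real (card (Perm m)) * (norm (c a))^2)"
    using Fdiag K0 by (intro sum_mono mult_right_mono) (auto simp: add_increasing, smt (verit) Fdiag)
  finally show ?thesis using E1 by (simp add: sum_distrib_left)
qed


definition avgset :: "'b set \<Rightarrow> ('b \<Rightarrow> real) \<Rightarrow> real" where
  "avgset A f = (\<Sum>x\<in>A. f x) / real (card A)"

lemma avgset_mono: "finite A \<Longrightarrow> (\<And>x. x \<in> A \<Longrightarrow> f x \<le> g x) \<Longrightarrow> avgset A f \<le> avgset A g"
  unfolding avgset_def by (intro divide_right_mono sum_mono) auto
lemma avgset_add: "avgset A (\<lambda>x. f x + g x) = avgset A f + avgset A g"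
  unfolding avgset_def by (simp add: sum.distrib add_divide_distrib)
lemma avgset_cmult: "avgset A (\<lambda>x. c * f x) = c * avgset A f"
  unfolding avgset_def by (simp add: sum_distrib_left)
lemma avgset_const: "finite A \<Longrightarrow> A \<noteq> {} \<Longrightarrow> avgset A (\<lambda>x. c) = c"
  unfolding avgset_def by simp
lemma avgset_sum: "avgset A (\<lambda>x. \<Sum>k\<in>K. f k x) = (\<Sum>k\<in>K. avgset A (f k))"
  unfolding avgset_def by (simp add: sum.swap[of _ A] sum_divide_distrib)
lemma avgset_nonneg: "(\<And>x. x \<in> A \<Longrightarrow> 0 \<le> f x) \<Longrightarrow> 0 \<le> avgset A f"
  unfolding avgset_def by (simp add: sum_nonneg)

definition PP :: "nat \<Rightarrow> ('n::finite \<Rightarrow> nat \<Rightarrow> nat) set" where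
  "PP m = {\<pi>. \<forall>i. \<pi> i \<in> Perm m}"

lemma PP_PiE: "PP m = PiE UNIV (\<lambda>_. Perm m)"
  unfolding PP_def by (auto simp: PiE_UNIV_domain)

lemma PP_finite: "finite (PP m)" unfolding PP_PiE by (intro finite_PiE) (auto simp: Perm_finite)
lemma PP_id: "(\<lambda>i. id) \<in> PP m" unfolding PP_def by (simp add: Perm_id)
lemma PP_ne: "PP m \<noteq> {}" using PP_id by blast

lemma PP_marginal:
  fixes j :: "'n::finite"
  shows "avgset (PP m :: ('n \<Rightarrow> nat \<Rightarrow> nat) set) (\<lambda>\<pi>. \<phi> (\<pi> j)) = avgset (Perm m) \<phi>"
proof -
  define c where "c = real (card (Perm m))"
  have c0: "c > 0" unfolding c_def using Perm_card_pos by simp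
  define f where "f i p = (if i = j then \<phi> p else 1)" for i p
  have "(\<Sum>\<pi>\<in>PP m. \<phi> (\<pi> j)) = (\<Sum>\<pi>\<in>PiE UNIV (\<lambda>_. Perm m). \<Prod>i\<in>UNIV. f i (\<pi> i))"
    unfolding PP_PiE f_def by simp
  also have "\<dots> = (\<Prod>i\<in>UNIV. \<Sum>p\<in>Perm m. f i p)"
    by (rule prod_sum_PiE[symmetric]) (auto simp: Perm_finite)
  also have "\<dots> = (\<Prod>i\<in>UNIV. if i = j then (\<Sum>p\<in>Perm m. \<phi> p) else c)"
    unfolding f_def c_def by (intro prod.cong) auto
  also have "\<dots> = (\<Sum>p\<in>Perm m. \<phi> p) * (\<Prod>i\<in>UNIV - {j}. c)"
    by (subst prod.remove[of _ j]) (auto intro!: prod.cong)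
  finally have 1: "(\<Sum>\<pi>\<in>PP m. \<phi> (\<pi> j)) = (\<Sum>p\<in>Perm m. \<phi> p) * (\<Prod>i\<in>UNIV - {j}. c)" .
  have "real (card (PP m :: ('n \<Rightarrow> nat \<Rightarrow> nat) set)) = (\<Prod>i\<in>(UNIV::'n set). c)"
    unfolding PP_PiE c_def by (simp add: card_PiE)
  also have "\<dots> = c * (\<Prod>i\<in>UNIV - {j}. c)"
    by (subst prod.remove[of "UNIV::'n set" j]) auto
  finally have 2: "real (card (PP m :: ('n \<Rightarrow> nat \<Rightarrow> nat) set)) = c * (\<Prod>i\<in>UNIV - {j}. c)" .
  have "(\<Prod>i\<in>UNIV - {j}. c) > 0" using c0 by (simp add: prod_pos)
  then show ?thesis unfolding avgset_def 1 2 c_def by simp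
qed

lemma sched_at: "\<sigma> \<in> schedules m t \<Longrightarrow> \<sigma> t = (\<lambda>i. id)"
  unfolding schedules_def by auto

lemma sched_Suc:
  "schedules m (Suc t) = (\<lambda>(\<sigma>, \<pi>). \<sigma>(t := \<pi>)) ` (schedules m t \<times> PP m)"
proof (rule set_eqI)
  fix \<tau>
  show "\<tau> \<in> schedules m (Suc t) \<longleftrightarrow> \<tau> \<in> (\<lambda>(\<sigma>, \<pi>). \<sigma>(t := \<pi>)) ` (schedules m t \<times> PP m)"
  proof
    assume a: "\<tau> \<in> schedules m (Suc t)"
    have "\<tau>(t := (\<lambda>i. id)) \<in> schedules m t" using a unfolding schedules_def by auto
    moreover have "\<tau> t \<in> PP m" using a unfolding schedules_def PP_def Perm_def by auto
    moreover have "\<tau> = (\<tau>(t := (\<lambda>i. id)))(t := \<tau> t)" by simp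
    ultimately show "\<tau> \<in> (\<lambda>(\<sigma>, \<pi>). \<sigma>(t := \<pi>)) ` (schedules m t \<times> PP m)"
      by (intro rev_image_eqI[of "(\<tau>(t := (\<lambda>i. id)), \<tau> t)"]) auto
  next
    assume "\<tau> \<in> (\<lambda>(\<sigma>, \<pi>). \<sigma>(t := \<pi>)) ` (schedules m t \<times> PP m)"
    then obtain \<sigma> \<pi> where s: "\<sigma> \<in> schedules m t" "\<pi> \<in> PP m" "\<tau> = \<sigma>(t := \<pi>)" by auto
    then show "\<tau> \<in> schedules m (Suc t)" unfolding schedules_def PP_def Perm_def
      by (auto simp: less_Suc_eq)
  qed
qed

lemma sched_inj: "inj_on (\<lambda>(\<sigma>, \<pi>). \<sigma>(t := \<pi>)) (schedules m t \<times> PP m)"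
proof (rule inj_onI, clarify)
  fix \<sigma> \<pi> \<sigma>' \<pi>'
  assume a: "\<sigma> \<in> schedules m t" "\<sigma>' \<in> schedules m t" "\<sigma>(t := \<pi>) = \<sigma>'(t := \<pi>')"
  have "\<pi> = \<pi>'" using fun_cong[OF a(3), of t] by simp
  moreover have "\<sigma> = \<sigma>'"
  proof
    fix e show "\<sigma> e = \<sigma>' e"
      using fun_cong[OF a(3), of e] sched_at[OF a(1)] sched_at[OF a(2)] by (cases "e = t") auto
  qed
  ultimately show "\<sigma> = \<sigma>' \<and> \<pi> = \<pi>'" by simp
qed

lemma sched_0: "schedules m 0 = {\<lambda>e i. id}"
  unfolding schedules_def by auto

lemma sched_finite_ne: "finite (schedules m t) \<and> schedules m t \<noteq> {}"
proof (induction t)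
  case 0 then show ?case by (simp add: sched_0)
next
  case (Suc t)
  then show ?case unfolding sched_Suc using PP_finite PP_ne by auto
qed

lemma sched_sum:
  "(\<Sum>\<tau>\<in>schedules m (Suc t). h \<tau>) = (\<Sum>\<sigma>\<in>schedules m t. \<Sum>\<pi>\<in>PP m. h (\<sigma>(t := \<pi>)))"
  unfolding sched_Suc
  by (subst sum.reindex[OF sched_inj]) (simp add: sum.cartesian_product case_prod_unfold)

lemma sched_card:
  "card (schedules m (Suc t) :: (nat \<Rightarrow> 'n::finite \<Rightarrow> nat \<Rightarrow> nat) set)
     = card (schedules m t :: (nat \<Rightarrow> 'n \<Rightarrow> nat \<Rightarrow> nat) set) * card (PP m :: ('n \<Rightarrow> nat \<Rightarrow> nat) set)"
  unfolding sched_Suc by (subst card_image[OF sched_inj]) (simp add: card_cartesian_product)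

lemma expect_sched_avg: "expect_sched m t h = avgset (schedules m t) h"
  unfolding expect_sched_def avgset_def by simp

lemma expect_sched_Suc:
  "expect_sched m (Suc t) (h :: (nat \<Rightarrow> 'n::finite \<Rightarrow> nat \<Rightarrow> nat) \<Rightarrow> real)
     = expect_sched m t (\<lambda>\<sigma>. avgset (PP m) (\<lambda>\<pi>. h (\<sigma>(t := \<pi>))))"
proof -
  have c1: "card (PP m :: ('n \<Rightarrow> nat \<Rightarrow> nat) set) > 0" using PP_finite PP_ne card_gt_0_iff by blast
  show ?thesis
    unfolding expect_sched_def avgset_def sched_sum sched_card
    using c1 by (simp add: sum_divide_distrib[symmetric] field_simps)
qed

lemma drr_iter_cong:
  "(\<And>e. e < t \<Longrightarrow> \<sigma> e = \<sigma>' e) \<Longrightarrow> drr_iter W \<alpha> g m \<sigma> x0 t = drr_iter W \<alpha> g m \<sigma>' x0 t"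
  by (induction t) auto

lemma drr_iter_upd:
  "drr_iter W \<alpha> g m (\<sigma>(t := \<pi>)) x0 (Suc t) = drr_inner W \<alpha> g \<pi> (drr_iter W \<alpha> g m \<sigma> x0 t) m"
proof -
  have "drr_iter W \<alpha> g m (\<sigma>(t := \<pi>)) x0 t = drr_iter W \<alpha> g m \<sigma> x0 t"
    by (rule drr_iter_cong) simp
  then show ?thesis by simp
qed


lemma arith1:
  fixes n \<alpha> \<mu> L C T P Q E Sy :: real
  assumes n: "n > 0" and a: "\<alpha> > 0" and mu: "\<mu> > 0" and aL: "\<alpha> * L^2 \<le> \<mu> / 2" and C: "C \<ge> 0" and T: "T \<ge> 0"
    and hP: "P \<ge> \<mu>/2*(n*E + C) + \<mu>/4*T - n*L/2*Sy - L^2/\<mu>*C"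
    and hQ: "Q \<le> L^2/n * T"
  shows "E - 2*(\<alpha>/n)*P + \<alpha>^2*Q \<le> (1-\<alpha>*\<mu>)*E + \<alpha>*L*Sy + (2*\<alpha>*L^2/\<mu>)*(C/n)"
proof -
  have k: "2*(\<alpha>/n) > 0" using a n by simp
  have 1: "2*(\<alpha>/n)*P \<ge> 2*(\<alpha>/n)*(\<mu>/2*(n*E + C) + \<mu>/4*T - n*L/2*Sy - L^2/\<mu>*C)"
    using mult_left_mono[OF hP, of "2*(\<alpha>/n)"] k by simp
  have 2: "2*(\<alpha>/n)*(\<mu>/2*(n*E + C) + \<mu>/4*T - n*L/2*Sy - L^2/\<mu>*C)
      = \<alpha>*\<mu>*E + \<alpha>*\<mu>*(C/n) + (\<alpha>*\<mu>/2)*(T/n) - \<alpha>*L*Sy - (2*\<alpha>*L^2/\<mu>)*(C/n)"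
    using n mu by (simp add: field_simps)
  have 3: "\<alpha>^2*Q \<le> \<alpha>^2*(L^2/n * T)" using mult_left_mono[OF hQ, of "\<alpha>^2"] by simp
  have 4: "\<alpha>^2*(L^2/n * T) = (\<alpha> * (\<alpha> * L^2)) * (T/n)" by (simp add: power2_eq_square)
  have 5: "(\<alpha> * (\<alpha> * L^2)) * (T/n) \<le> (\<alpha>*\<mu>/2) * (T/n)"
    using mult_right_mono[OF mult_left_mono[OF aL, of \<alpha>], of "T/n"] a n T by simp
  have 6: "\<alpha>*\<mu>*(C/n) \<ge> 0" using a mu C n by simp
  have "E - 2*(\<alpha>/n)*P + \<alpha>^2*Q \<le> E - \<alpha>*\<mu>*E + \<alpha>*L*Sy + (2*\<alpha>*L^2/\<mu>)*(C/n)"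
    using 1 2 3 4 5 6 by linarith
  also have "\<dots> = (1-\<alpha>*\<mu>)*E + \<alpha>*L*Sy + (2*\<alpha>*L^2/\<mu>)*(C/n)" by (simp add: algebra_simps)
  finally show ?thesis .
qed

lemma mixsq_real:
  fixes r x y :: real
  assumes r: "0 \<le> r" "r < 1" and xy: "0 \<le> x" "0 \<le> y"
  shows "r * (x + y)^2 \<le> (1 + 3*r)/4 * x^2 + 4*r/(1-r) * y^2"
proof -
  have d: "1 - r > 0" using r by simp
  have "0 \<le> ((1-r)*x - 4*r*y)^2 + 12*r*(1-r)*y^2" using r by simp
  also have "\<dots> = 4*(1-r) * ((1 + 3*r)/4 * x^2 + 4*r/(1-r) * y^2 - r * (x + y)^2)"
    using d by (simp add: field_simps power2_eq_square)
  finally have "0 \<le> (1 + 3*r)/4 * x^2 + 4*r/(1-r) * y^2 - r * (x + y)^2"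
    using d by (simp add: zero_le_mult_iff)
  then show ?thesis by simp
qed

lemma mixsq:
  fixes u v :: "'a::real_normed_vector"
  assumes r: "0 \<le> r" "r < 1"
  shows "r * (norm (u - v))^2 \<le> (1 + 3*r)/4 * (norm u)^2 + 4*r/(1-r) * (norm v)^2"
proof -
  have "(norm (u - v))^2 \<le> (norm u + norm v)^2"
    using norm_triangle_ineq4[of u v] by (simp add: power_mono)
  then have "r * (norm (u - v))^2 \<le> r * (norm u + norm v)^2" using r by (simp add: mult_left_mono)
  also have "\<dots> \<le> (1 + 3*r)/4 * (norm u)^2 + 4*r/(1-r) * (norm v)^2"
    using mixsq_real[OF r] by simp
  finally show ?thesis .
qed

lemma sq_sum2: "(x + y)^2 \<le> 2 * x^2 + 2 * (y::real)^2"
proof -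
  have "0 \<le> (x - y)^2" by simp
  then show ?thesis by (simp add: power2_eq_square algebra_simps)
qed

lemma norm_sq_add2: "(norm (u + v))^2 \<le> 2 * (norm u)^2 + 2 * (norm (v::'a::real_normed_vector))^2"
proof -
  have "(norm (u + v))^2 \<le> (norm u + norm v)^2" using norm_triangle_ineq[of u v] by (simp add: power_mono)
  then show ?thesis using sq_sum2[of "norm u" "norm v"] by linarith
qed

locale drr_setup =
  fixes W :: "real^'n::finite^'n" and f :: "'n \<Rightarrow> nat \<Rightarrow> 'a::euclidean_space \<Rightarrow> real"
    and g :: "'n \<Rightarrow> nat \<Rightarrow> 'a \<Rightarrow> 'a" and m :: nat and \<mu> L \<alpha> :: real and xstar :: 'a
  assumes m_pos: "m \<ge> 1"
    and grad: "\<And>i l x. l < m \<Longrightarrow> (f i l has_derivative (\<lambda>h. g i l x \<bullet> h)) (at x)"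
    and mu_pos: "0 < \<mu>" and mu_le_L: "\<mu> \<le> L"
    and sconv: "\<And>i l. l < m \<Longrightarrow> strongly_convex \<mu> (f i l)"
    and lip: "\<And>i l. l < m \<Longrightarrow> L-lipschitz_on UNIV (g i l)"
    and W_sym: "\<And>i j. W$i$j = W$j$i"
    and W_stoch: "\<And>i. (\<Sum>j\<in>UNIV. W$i$j) = 1"
    and alpha_pos: "0 < \<alpha>"
    and r_lt: "(rho_w W)^2 < 1"
    and a2: "\<alpha> * \<mu> \<le> (1 - (rho_w W)^2) / 2"
    and a3: "1920 * \<alpha>^2 * L^4 \<le> (1 - (rho_w W)^2)^2 * \<mu>^2"
    and gz: "(\<Sum>i\<in>UNIV. \<Sum>l<m. g i l xstar) = 0"
begin

definition "nn = real CARD('n)"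
definition "r = (rho_w W)^2"

lemma nn_pos: "nn > 0" unfolding nn_def by simp
lemma r_ge0: "r \<ge> 0" and r_lt1: "r < 1" using r_lt unfolding r_def by auto
lemma L_pos: "L > 0" using mu_pos mu_le_L by simp

lemma aL2: "\<alpha> * L^2 \<le> \<mu> / 40"
proof -
  have "(1 - r)^2 \<le> 1" using r_ge0 r_lt1 by (simp add: power_le_one)
  then have "(1 - r)^2 * \<mu>^2 \<le> \<mu>^2" by (simp add: mult_left_le_one_le)
  then have "1920 * (\<alpha> * L^2)^2 \<le> \<mu>^2" using a3 unfolding r_def by (simp add: power_mult_distrib power2_eq_square[of "L^2"] power4_eq_xxxx mult.assoc)
  moreover have "(\<mu> / 40)^2 = \<mu>^2 / 1600" by (simp add: power_divide)
  ultimately have h2: "(\<alpha> * L^2)^2 \<le> (\<mu> / 40)^2" using zero_le_power2[of "\<alpha> * L^2"] by linarith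
  show ?thesis using power2_le_imp_le[OF h2] mu_pos by simp
qed

definition step :: "('n \<Rightarrow> nat \<Rightarrow> nat) \<Rightarrow> nat \<Rightarrow> ('n \<Rightarrow> 'a) \<Rightarrow> ('n \<Rightarrow> 'a)" where
  "step \<pi> l X = (\<lambda>i. \<Sum>j\<in>UNIV. W$i$j *\<^sub>R (X j - \<alpha> *\<^sub>R g j (\<pi> j l) (X j)))"

lemma inner_Suc: "drr_inner W \<alpha> g \<pi> X (Suc l) = step \<pi> l (drr_inner W \<alpha> g \<pi> X l)"
  by (simp add: step_def Let_def)

lemma avg_step: "avg_pt (step \<pi> l X) = avg_pt X - (\<alpha> / nn) *\<^sub>R (\<Sum>j\<in>UNIV. g j (\<pi> j l) (X j))"
proof -
  have "avg_pt (step \<pi> l X) = avg_pt (\<lambda>j. X j - \<alpha> *\<^sub>R g j (\<pi> j l) (X j))"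
    unfolding step_def by (rule mix_avg[OF W_sym W_stoch])
  also have "\<dots> = avg_pt X - (\<alpha> / nn) *\<^sub>R (\<Sum>j\<in>UNIV. g j (\<pi> j l) (X j))"
    unfolding avg_pt_def nn_def by (simp add: sum_subtractf scaleR_diff_right scaleR_sum_right[symmetric])
  finally show ?thesis .
qed

lemma PP_idx: "\<pi> \<in> PP m \<Longrightarrow> l < m \<Longrightarrow> \<pi> j l < m"
  unfolding PP_def by (simp add: Perm_range)

lemma grad_lip: "k < m \<Longrightarrow> norm (g j k x - g j k y) \<le> L * norm (x - y)"
  using lipschitz_on_normD[OF lip] by simp

lemma step_E:
  assumes pi: "\<pi> \<in> PP m" and l: "l < m"
  shows "(norm (avg_pt (step \<pi> l X) - (ys - (\<alpha> / nn) *\<^sub>R (\<Sum>j\<in>UNIV. g j (\<pi> j l) xstar))))^2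
     \<le> (1 - \<alpha>*\<mu>) * (norm (avg_pt X - ys))^2 + \<alpha>*L*(norm (ys - xstar))^2 + (2*\<alpha>*L^2/\<mu>) * (consensus_err X / nn)"
proof -
  have idx: "\<pi> j l < m" for j using PP_idx[OF pi l] .
  define h where "h j = g j (\<pi> j l) (X j) - g j (\<pi> j l) xstar" for j
  define a where "a = avg_pt X"
  define e where "e = a - ys"
  define v where "v = (1/nn) *\<^sub>R (\<Sum>j\<in>UNIV. h j)"
  have eq: "avg_pt (step \<pi> l X) - (ys - (\<alpha> / nn) *\<^sub>R (\<Sum>j\<in>UNIV. g j (\<pi> j l) xstar)) = e - \<alpha> *\<^sub>R v"
  proof -
    have "(\<alpha> / nn) *\<^sub>R (\<Sum>j\<in>UNIV. g j (\<pi> j l) (X j)) - (\<alpha> / nn) *\<^sub>R (\<Sum>j\<in>UNIV. g j (\<pi> j l) xstar)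
          = \<alpha> *\<^sub>R v"
      unfolding v_def h_def by (simp add: sum_subtractf scaleR_diff_right)
    then show ?thesis unfolding avg_step e_def a_def by (simp add: algebra_simps)
  qed
  define P where "P = (\<Sum>j\<in>UNIV. h j \<bullet> e)"
  define Q where "Q = (norm v)^2"
  define T where "T = (\<Sum>j\<in>UNIV. (norm (X j - xstar))^2)"
  define C where "C = consensus_err X"
  have sq: "(norm (e - \<alpha> *\<^sub>R v))^2 = (norm e)^2 - 2*(\<alpha>/nn)*P + \<alpha>^2*Q"
  proof -
    have "e \<bullet> (\<alpha> *\<^sub>R v) = (\<alpha>/nn) * P"
      unfolding v_def P_def by (simp add: inner_sum_right inner_commute)
    then show ?thesis unfolding Q_def norm_diff_sq by (simp add: power_mult_distrib)
  qed
  have pj: "h j \<bullet> e \<ge> \<mu> / 2 * (norm (X j - ys))^2 + \<mu> / 4 * (norm (X j - xstar))^2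
           - L / 2 * (norm (ys - xstar))^2 - L^2 / \<mu> * (norm (a - X j))^2" for j
    unfolding h_def e_def
    by (rule pt_ineq[where F="f j (\<pi> j l)"]) (auto intro: grad sconv lip idx mu_pos)
  have "P \<ge> (\<Sum>j\<in>UNIV. \<mu> / 2 * (norm (X j - ys))^2 + \<mu> / 4 * (norm (X j - xstar))^2
           - L / 2 * (norm (ys - xstar))^2 - L^2 / \<mu> * (norm (a - X j))^2)"
    unfolding P_def by (rule sum_mono) (rule pj)
  also have "(\<Sum>j\<in>UNIV. \<mu> / 2 * (norm (X j - ys))^2 + \<mu> / 4 * (norm (X j - xstar))^2
           - L / 2 * (norm (ys - xstar))^2 - L^2 / \<mu> * (norm (a - X j))^2)
      = \<mu> / 2 * (\<Sum>j\<in>UNIV. (norm (X j - ys))^2) + \<mu> / 4 * T - nn * L / 2 * (norm (ys - xstar))^2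
        - L^2 / \<mu> * (\<Sum>j\<in>UNIV. (norm (a - X j))^2)"
    unfolding T_def nn_def by (simp add: sum.distrib sum_subtractf sum_distrib_left)
  also have "(\<Sum>j\<in>UNIV. (norm (X j - ys))^2) = nn * (norm e)^2 + C"
    unfolding nn_def e_def a_def C_def by (rule avg_decomp)
  also have "(\<Sum>j\<in>UNIV. (norm (a - X j))^2) = C"
    unfolding C_def consensus_err_def a_def by (simp add: norm_minus_commute)
  finally have hP: "P \<ge> \<mu>/2*(nn*(norm e)^2 + C) + \<mu>/4*T - nn*L/2*(norm (ys - xstar))^2 - L^2/\<mu>*C" .
  have "Q \<le> (1/nn) * (\<Sum>j\<in>UNIV. (norm (h j))^2)"
    unfolding Q_def v_def nn_def by (rule avg_norm_sq)
  also have "\<dots> \<le> (1/nn) * (\<Sum>j\<in>UNIV. L^2 * (norm (X j - xstar))^2)"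
  proof (intro mult_left_mono sum_mono)
    fix j
    have "norm (h j) \<le> L * norm (X j - xstar)" unfolding h_def by (rule grad_lip[OF idx])
    then show "(norm (h j))^2 \<le> L^2 * (norm (X j - xstar))^2"
      by (metis norm_ge_zero power_mono power_mult_distrib)
  qed (use nn_pos in simp)
  also have "\<dots> = L^2/nn * T" unfolding T_def by (simp add: sum_distrib_left)
  finally have hQ: "Q \<le> L^2/nn * T" .
  have aL: "\<alpha> * L^2 \<le> \<mu> / 2" using aL2 mu_pos by simp
  have C0: "C \<ge> 0" unfolding C_def by (rule consensus_err_nonneg)
  have T0: "T \<ge> 0" unfolding T_def by (simp add: sum_nonneg)
  show ?thesis unfolding eq sq
    using arith1[OF nn_pos alpha_pos mu_pos aL C0 T0 hP hQ] unfolding C_def e_def a_def .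
qed

lemma a2L2: "1920 * (\<alpha>^2 * L^2) \<le> (1 - r)^2"
proof -
  have "(1 - r)^2 * \<mu>^2 \<le> (1 - r)^2 * L^2"
    using mu_pos mu_le_L by (intro mult_left_mono power_mono) auto
  then have "L^2 * (1920 * (\<alpha>^2 * L^2)) \<le> L^2 * (1 - r)^2"
    using a3 unfolding r_def by (simp add: power4_eq_xxxx power2_eq_square algebra_simps)
  then show ?thesis using L_pos by simp
qed

lemma avg_diff: "avg_pt (\<lambda>j. X j - Y j) = avg_pt X - avg_pt (Y :: 'n \<Rightarrow> 'a)"
  unfolding avg_pt_def by (simp add: sum_subtractf scaleR_diff_right)

lemma step_C:
  assumes pi: "\<pi> \<in> PP m" and l: "l < m"
  shows "consensus_err (step \<pi> l X) \<le> (1+r)/2 * consensus_err X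
     + (16*r*\<alpha>^2*L^2*nn/(1-r)) * ((norm (avg_pt X - ys))^2 + (norm (ys - xstar))^2)
     + (8*r*\<alpha>^2/(1-r)) * (\<Sum>j\<in>UNIV. (norm (g j (\<pi> j l) xstar))^2)"
proof -
  have idx: "\<pi> j l < m" for j using PP_idx[OF pi l] .
  define K where "K j = g j (\<pi> j l) (X j)" for j
  define Ka where "Ka j = \<alpha> *\<^sub>R K j" for j
  define Y where "Y j = X j - Ka j" for j
  define a where "a = avg_pt X"
  define kb where "kb = avg_pt Ka"
  define C where "C = consensus_err X"
  define E where "E = (norm (avg_pt X - ys))^2"
  define Sy where "Sy = (norm (ys - xstar))^2"
  define S where "S = (\<Sum>j\<in>UNIV. (norm (g j (\<pi> j l) xstar))^2)"
  have r0: "0 \<le> r" "r < 1" using r_ge0 r_lt1 .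
  have "consensus_err (step \<pi> l X) \<le> r * consensus_err Y"
    unfolding step_def r_def Y_def Ka_def K_def by (rule mix_cons[OF W_sym W_stoch])
  also have "r * consensus_err Y = (\<Sum>j\<in>UNIV. r * (norm ((X j - a) - (Ka j - kb)))^2)"
  proof -
    have "avg_pt Y = a - kb" unfolding Y_def a_def kb_def by (rule avg_diff)
    then show ?thesis unfolding consensus_err_def sum_distrib_left Y_def
      by (intro sum.cong) (auto simp: algebra_simps)
  qed
  also have "\<dots> \<le> (\<Sum>j\<in>UNIV. (1 + 3*r)/4 * (norm (X j - a))^2 + 4*r/(1-r) * (norm (Ka j - kb))^2)"
    by (rule sum_mono) (rule mixsq[OF r0])
  also have "\<dots> = (1 + 3*r)/4 * C + 4*r/(1-r) * consensus_err Ka"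
    unfolding C_def consensus_err_def a_def kb_def by (simp add: sum.distrib sum_distrib_left)
  finally have h1: "consensus_err (step \<pi> l X) \<le> (1 + 3*r)/4 * C + 4*r/(1-r) * consensus_err Ka" .
  have h2: "consensus_err Ka \<le> \<alpha>^2 * (\<Sum>j\<in>UNIV. (norm (K j))^2)"
    using cons_le_sumsq[of Ka] unfolding Ka_def by (simp add: power_mult_distrib sum_distrib_left)
  have "(\<Sum>j\<in>UNIV. (norm (K j))^2) \<le> (\<Sum>j\<in>UNIV. 2 * L^2 * (norm (X j - xstar))^2 + 2 * (norm (g j (\<pi> j l) xstar))^2)"
  proof (rule sum_mono)
    fix j
    have "(norm (K j - g j (\<pi> j l) xstar))^2 \<le> (L * norm (X j - xstar))^2"
      unfolding K_def using grad_lip[OF idx] by (intro power_mono) auto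
    moreover have "(norm (K j))^2 \<le> 2 * (norm (K j - g j (\<pi> j l) xstar))^2 + 2 * (norm (g j (\<pi> j l) xstar))^2"
      using norm_sq_add2[of "K j - g j (\<pi> j l) xstar" "g j (\<pi> j l) xstar"] by simp
    ultimately show "(norm (K j))^2 \<le> 2 * L^2 * (norm (X j - xstar))^2 + 2 * (norm (g j (\<pi> j l) xstar))^2"
      by (simp add: power_mult_distrib)
  qed
  also have "\<dots> = 2 * L^2 * (\<Sum>j\<in>UNIV. (norm (X j - xstar))^2) + 2 * S"
    unfolding S_def by (simp add: sum.distrib sum_distrib_left)
  also have "(\<Sum>j\<in>UNIV. (norm (X j - xstar))^2) = nn * (norm (a - xstar))^2 + C"
    unfolding nn_def a_def C_def by (rule avg_decomp)
  finally have h3: "(\<Sum>j\<in>UNIV. (norm (K j))^2) \<le> 2 * L^2 * (nn * (norm (a - xstar))^2 + C) + 2 * S" .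
  have h5: "(norm (a - xstar))^2 \<le> 2 * E + 2 * Sy"
    using norm_sq_add2[of "avg_pt X - ys" "ys - xstar"] unfolding a_def E_def Sy_def by simp
  have h35: "(\<Sum>j\<in>UNIV. (norm (K j))^2) \<le> 2 * L^2 * (nn * (2 * E + 2 * Sy) + C) + 2 * S"
  proof -
    have "2 * L^2 * (nn * (norm (a - xstar))^2 + C) \<le> 2 * L^2 * (nn * (2 * E + 2 * Sy) + C)"
      using h5 nn_pos by (intro mult_left_mono add_right_mono) auto
    then show ?thesis using h3 by linarith
  qed
  have h25: "consensus_err Ka \<le> \<alpha>^2 * (2 * L^2 * (nn * (2 * E + 2 * Sy) + C) + 2 * S)"
    using h2 mult_left_mono[OF h35, of "\<alpha>^2"] by simp
  have c0: "4*r/(1-r) \<ge> 0" using r0 by simp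
  have main: "consensus_err (step \<pi> l X) \<le> (1 + 3*r)/4 * C + 4*r/(1-r) * (\<alpha>^2 * (2 * L^2 * (nn * (2 * E + 2 * Sy) + C) + 2 * S))"
    using h1 mult_left_mono[OF h25 c0] by linarith
  have d: "1 - r > 0" using r0 by simp
  have coef: "8*r*\<alpha>^2*L^2/(1-r) \<le> (1-r)/4"
  proof -
    have "32 * r * (\<alpha>^2*L^2) \<le> 32 * (\<alpha>^2*L^2)" using r0 by (intro mult_right_mono) auto
    also have "\<dots> \<le> (1-r)^2"
    proof -
      have "0 \<le> \<alpha>^2 * L^2" by simp
      then show ?thesis using a2L2 by linarith
    qed
    finally show ?thesis using d by (simp add: field_simps power2_eq_square)
  qed
  have expand: "(1 + 3*r)/4 * C + 4*r/(1-r) * (\<alpha>^2 * (2 * L^2 * (nn * (2 * E + 2 * Sy) + C) + 2 * S))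
      = ((1 + 3*r)/4 + 8*r*\<alpha>^2*L^2/(1-r)) * C + (16*r*\<alpha>^2*L^2*nn/(1-r)) * (E + Sy) + (8*r*\<alpha>^2/(1-r)) * S"
  proof -
    define k where "k = r/(1-r)"
    have k1: "4*r/(1-r) = 4*k" "8*r*\<alpha>^2*L^2/(1-r) = 8*k*\<alpha>^2*L^2"
      "16*r*\<alpha>^2*L^2*nn/(1-r) = 16*k*\<alpha>^2*L^2*nn" "8*r*\<alpha>^2/(1-r) = 8*k*\<alpha>^2"
      unfolding k_def by simp_all
    show ?thesis unfolding k1 by (simp add: algebra_simps)
  qed
  have "((1 + 3*r)/4 + 8*r*\<alpha>^2*L^2/(1-r)) * C \<le> (1+r)/2 * C"
  proof -
    obtain x where xd: "x = 8*r*\<alpha>^2*L^2/(1-r)" by blast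
    have "x \<le> (1-r)/4" using coef xd by simp
    then have "(1 + 3*r)/4 + x \<le> (1+r)/2" by (simp add: field_simps)
    then have "(1 + 3*r)/4 + 8*r*\<alpha>^2*L^2/(1-r) \<le> (1+r)/2" using xd by simp
    then show ?thesis using consensus_err_nonneg[of X] unfolding C_def by (rule mult_right_mono)
  qed
  then show ?thesis using main expand unfolding C_def E_def Sy_def S_def by linarith
qed

end


lemma lyap_comb:
  fixes E' Cn' E Sy Cn Sn k p c1 qc a b w :: real
  assumes hE: "E' \<le> (1-k)*E + p*Sy + c1*Cn"
    and hC: "Cn' \<le> qc*Cn + a*(E+Sy) + b*Sn"
    and w: "w \<ge> 0" and c1: "w*a \<le> k/2" and c2: "w*a \<le> p" and c3: "c1 + w*qc \<le> (1-k/2)*w"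
    and nn: "E \<ge> 0" "Sy \<ge> 0" "Cn \<ge> 0" "Sn \<ge> 0"
  shows "E' + w*Cn' \<le> (1-k/2)*(E + w*Cn) + 2*p*Sy + (w*b)*Sn"
proof -
  have 1: "w*Cn' \<le> w*(qc*Cn + a*(E+Sy) + b*Sn)" using mult_left_mono[OF hC w] .
  have 2: "w*(qc*Cn + a*(E+Sy) + b*Sn) = (w*qc)*Cn + (w*a)*E + (w*a)*Sy + (w*b)*Sn"
    by (simp add: algebra_simps)
  have 3: "(w*a)*E \<le> (k/2)*E" using mult_right_mono[OF c1 nn(1)] .
  have 4: "(w*a)*Sy \<le> p*Sy" using mult_right_mono[OF c2 nn(2)] .
  have 5: "(c1 + w*qc)*Cn \<le> ((1-k/2)*w)*Cn" using mult_right_mono[OF c3 nn(3)] .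
  have 6: "(1-k)*E = E - k*E" "(c1 + w*qc)*Cn = c1*Cn + (w*qc)*Cn" "((1-k/2)*w)*Cn = w*Cn - (k/2)*(w*Cn)"
    "(1-k/2)*(E + w*Cn) = E - (k/2)*E + w*Cn - (k/2)*(w*Cn)" "(k/2)*E = k*E - (k/2)*E"
    by (simp_all add: algebra_simps)
  have 7: "E' + w*Cn' \<le> (E - k*E + p*Sy + c1*Cn) + ((w*qc)*Cn + (w*a)*E + (w*a)*Sy + (w*b)*Sn)"
    using hE 1 2 6(1) by linarith
  have 8: "(w*a)*E + (w*a)*Sy + (c1*Cn + (w*qc)*Cn) \<le> (k/2)*E + p*Sy + (w*Cn - (k/2)*(w*Cn))"
    using 3 4 5 6(2,3) by linarith
  show ?thesis using 7 8 6(4,5) by linarith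
qed

context drr_setup
begin

definition "w = 16*\<alpha>*L^2/(\<mu>*(1-r))"
definition "q = 1 - \<alpha>*\<mu>/2"
definition "qc = (1+r)/2"
definition "ac = 16*r*\<alpha>^2*L^2/(1-r)"
definition "bc = 8*r*\<alpha>^2/(1-r)"

lemma w_nonneg: "w \<ge> 0" unfolding w_def using alpha_pos mu_pos r_lt1 by simp
lemma ac_nonneg: "ac \<ge> 0" unfolding ac_def using r_ge0 r_lt1 by simp
lemma bc_nonneg: "bc \<ge> 0" unfolding bc_def using r_ge0 r_lt1 by simp
lemma a2': "2 * (\<alpha> * \<mu>) \<le> 1 - r" using a2 unfolding r_def by (simp add: field_simps)
lemma amu_le: "\<alpha> * \<mu> \<le> 1/2" using a2' r_ge0 by simp
lemma q_bounds: "0 \<le> q" "q \<le> 1" "q < 1" unfolding q_def using amu_le alpha_pos mu_pos by auto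
lemma qc_bounds: "0 \<le> qc" "qc \<le> 1" "qc < 1" unfolding qc_def using r_ge0 r_lt1 by auto

lemma coef1: "w*ac \<le> \<alpha>*\<mu>/2"
proof -
  have d: "1 - r > 0" using r_lt1 by simp
  have "512 * r * (\<alpha>^2 * L^4) \<le> 512 * (\<alpha>^2 * L^4)" using r_lt1 by (intro mult_right_mono) auto
  also have "\<dots> \<le> (1-r)^2 * \<mu>^2"
  proof -
    have nz: "0 \<le> \<alpha>^2 * L^4" by simp
    have "1920 * (\<alpha>^2 * L^4) \<le> (1-r)^2 * \<mu>^2" using a3 unfolding r_def by (simp add: mult.assoc)
    then show ?thesis using nz by linarith
  qed
  finally have h: "512 * r * (\<alpha>^2 * L^4) \<le> (1-r)^2 * \<mu>^2" .
  have Y: "\<mu>*(1-r)*(1-r) > 0" using d mu_pos by simp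
  have "w*ac = (16*\<alpha>*L^2*(16*r*\<alpha>^2*L^2)) / (\<mu>*(1-r)*(1-r))"
    unfolding w_def ac_def by (simp add: mult.assoc)
  also have "\<dots> \<le> \<alpha>*\<mu>/2"
  proof (subst pos_divide_le_eq[OF Y])
    have eq1: "16*\<alpha>*L^2*(16*r*\<alpha>^2*L^2) = (\<alpha>/2)*(512*r*(\<alpha>^2*L^4))"
      by (simp add: power2_eq_square power4_eq_xxxx algebra_simps)
    have eq2: "\<alpha>*\<mu>/2*(\<mu>*(1-r)*(1-r)) = (\<alpha>/2)*((1-r)^2*\<mu>^2)"
      by (simp add: power2_eq_square algebra_simps)
    show "16*\<alpha>*L^2*(16*r*\<alpha>^2*L^2) \<le> \<alpha>*\<mu>/2*(\<mu>*(1-r)*(1-r))"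
      unfolding eq1 eq2 using h alpha_pos by (intro mult_left_mono) auto
  qed
  finally show ?thesis .
qed

lemma coef2: "w*ac \<le> \<alpha>*L"
proof -
  have "\<alpha>*\<mu> \<le> \<alpha>*L" using alpha_pos mu_le_L by simp
  then have "\<alpha>*\<mu>/2 \<le> \<alpha>*L" using alpha_pos mu_pos by (simp add: field_simps)
  then show ?thesis using coef1 by linarith
qed

lemma coef3: "2*\<alpha>*L^2/\<mu> + w*qc \<le> (1-\<alpha>*\<mu>/2)*w"
proof -
  have d: "1 - r > 0" using r_lt1 by simp
  have k: "\<alpha>*L^2/\<mu> \<ge> 0" using alpha_pos mu_pos by simp
  have e1: "w*qc = (8 + 8*r)/(1-r) * (\<alpha>*L^2/\<mu>)" unfolding w_def qc_def using d mu_pos by (simp add: field_simps)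
  have e2: "(1-\<alpha>*\<mu>/2)*w = (16 - 8*(\<alpha>*\<mu>))/(1-r) * (\<alpha>*L^2/\<mu>)" unfolding w_def using d mu_pos by (simp add: field_simps)
  have e3: "2*\<alpha>*L^2/\<mu> = 2 * (\<alpha>*L^2/\<mu>)" by simp
  have "8*(\<alpha>*\<mu>) \<le> 4*(1-r)" using a2' by simp
  then have "2*(1-r) + (8 + 8*r) \<le> 16 - 8*(\<alpha>*\<mu>)" using r_lt1 by simp
  then have "(2*(1-r) + (8 + 8*r))/(1-r) \<le> (16 - 8*(\<alpha>*\<mu>))/(1-r)" using d by (rule divide_right_mono[OF _ less_imp_le])
  moreover have "2 + (8 + 8*r)/(1-r) = (2*(1-r) + (8 + 8*r))/(1-r)" using d by (simp add: field_simps)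
  ultimately have "2 + (8 + 8*r)/(1-r) \<le> (16 - 8*(\<alpha>*\<mu>))/(1-r)" by simp
  then have "(2 + (8 + 8*r)/(1-r)) * (\<alpha>*L^2/\<mu>) \<le> (16 - 8*(\<alpha>*\<mu>))/(1-r) * (\<alpha>*L^2/\<mu>)"
    using k by (rule mult_right_mono)
  then show ?thesis unfolding e1 e2 e3 by (simp add: algebra_simps)
qed

definition ysh :: "('n \<Rightarrow> nat \<Rightarrow> nat) \<Rightarrow> nat \<Rightarrow> 'a" where
  "ysh \<pi> k = xstar - (\<alpha>/nn) *\<^sub>R (\<Sum>k'<k. \<Sum>j\<in>UNIV. g j (\<pi> j k') xstar)"
definition "Xs \<pi> X l = drr_inner W \<alpha> g \<pi> X l"
definition "Ek \<pi> X l = (norm (avg_pt (Xs \<pi> X l) - ysh \<pi> l))^2"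
definition "Cnk \<pi> X l = consensus_err (Xs \<pi> X l) / nn"
definition "Vk \<pi> X l = Ek \<pi> X l + w * Cnk \<pi> X l"
definition "Sy \<pi> l = (norm (ysh \<pi> l - xstar))^2"
definition "Sg \<pi> l = (\<Sum>j\<in>UNIV. (norm (g j (\<pi> j l) xstar))^2)"

lemma ysh_Suc: "ysh \<pi> (Suc l) = ysh \<pi> l - (\<alpha>/nn) *\<^sub>R (\<Sum>j\<in>UNIV. g j (\<pi> j l) xstar)"
  unfolding ysh_def by (simp add: scaleR_add_right algebra_simps)

lemma ysh_0: "ysh \<pi> 0 = xstar" unfolding ysh_def by simp

lemma Xs_Suc: "Xs \<pi> X (Suc l) = step \<pi> l (Xs \<pi> X l)" unfolding Xs_def by (rule inner_Suc)

lemma Cnk_nonneg: "Cnk \<pi> X l \<ge> 0" unfolding Cnk_def by (intro divide_nonneg_pos consensus_err_nonneg nn_pos)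
lemma Ek_nonneg: "Ek \<pi> X l \<ge> 0" unfolding Ek_def by simp
lemma Sy_nonneg: "Sy \<pi> l \<ge> 0" unfolding Sy_def by simp
lemma Sg_nonneg: "Sg \<pi> l \<ge> 0" unfolding Sg_def by (simp add: sum_nonneg)
lemma Ek_le_Vk: "Ek \<pi> X l \<le> Vk \<pi> X l" unfolding Vk_def using w_nonneg Cnk_nonneg by simp

lemma C_step_n:
  assumes pi: "\<pi> \<in> PP m" and l: "l < m"
  shows "Cnk \<pi> X (Suc l) \<le> qc * Cnk \<pi> X l + ac * (Ek \<pi> X l + Sy \<pi> l) + bc * (Sg \<pi> l / nn)"
proof -
  have h: "consensus_err (Xs \<pi> X (Suc l)) \<le> (1+r)/2 * consensus_err (Xs \<pi> X l)
     + (16*r*\<alpha>^2*L^2*nn/(1-r)) * (Ek \<pi> X l + Sy \<pi> l) + (8*r*\<alpha>^2/(1-r)) * Sg \<pi> l"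
    unfolding Xs_Suc Ek_def Sy_def Sg_def by (rule step_C[OF pi l])
  have "Cnk \<pi> X (Suc l) \<le> ((1+r)/2 * consensus_err (Xs \<pi> X l)
     + (16*r*\<alpha>^2*L^2*nn/(1-r)) * (Ek \<pi> X l + Sy \<pi> l) + (8*r*\<alpha>^2/(1-r)) * Sg \<pi> l) / nn"
    unfolding Cnk_def using h nn_pos by (simp add: divide_right_mono)
  also have "\<dots> = qc * Cnk \<pi> X l + ac * (Ek \<pi> X l + Sy \<pi> l) + bc * (Sg \<pi> l / nn)"
  proof -
    have e1: "16*r*\<alpha>^2*L^2*nn/(1-r) = ac*nn" unfolding ac_def by simp
    have e2: "8*r*\<alpha>^2/(1-r) = bc" "(1+r)/2 = qc" by (simp_all add: bc_def qc_def)
    show ?thesis unfolding e1 e2 Cnk_def add_divide_distrib using nn_pos by (simp add: qc_def field_simps)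
  qed
  finally show ?thesis .
qed

lemma V_step:
  assumes pi: "\<pi> \<in> PP m" and l: "l < m"
  shows "Vk \<pi> X (Suc l) \<le> q * Vk \<pi> X l + 2*(\<alpha>*L) * Sy \<pi> l + (w*bc) * (Sg \<pi> l / nn)"
proof -
  have hE: "Ek \<pi> X (Suc l) \<le> (1 - \<alpha>*\<mu>) * Ek \<pi> X l + (\<alpha>*L) * Sy \<pi> l + (2*\<alpha>*L^2/\<mu>) * Cnk \<pi> X l"
    unfolding Ek_def Sy_def Cnk_def Xs_Suc ysh_Suc using step_E[OF pi l] by simp
  have hC: "Cnk \<pi> X (Suc l) \<le> qc * Cnk \<pi> X l + ac * (Ek \<pi> X l + Sy \<pi> l) + bc * (Sg \<pi> l / nn)"
    by (rule C_step_n[OF pi l])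
  have c1: "w*ac \<le> (\<alpha>*\<mu>)/2" using coef1 by simp
  have c3: "2*\<alpha>*L^2/\<mu> + w*qc \<le> (1-(\<alpha>*\<mu>)/2)*w" using coef3 by simp
  have Sn: "Sg \<pi> l / nn \<ge> 0" by (intro divide_nonneg_pos Sg_nonneg nn_pos)
  have "Ek \<pi> X (Suc l) + w * Cnk \<pi> X (Suc l) \<le> (1-(\<alpha>*\<mu>)/2)*(Ek \<pi> X l + w*Cnk \<pi> X l) + 2*(\<alpha>*L)*Sy \<pi> l + (w*bc)*(Sg \<pi> l / nn)"
    by (rule lyap_comb[OF hE hC w_nonneg c1 coef2 c3 Ek_nonneg Sy_nonneg Cnk_nonneg Sn])
  then show ?thesis unfolding Vk_def q_def by simp
qed

lemma ysh_m:
  assumes pi: "\<pi> \<in> PP m"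
  shows "ysh \<pi> m = xstar"
proof -
  have "(\<Sum>k'<m. \<Sum>j\<in>UNIV. g j (\<pi> j k') xstar) = (\<Sum>j\<in>UNIV. \<Sum>k'<m. g j (\<pi> j k') xstar)"
    by (rule sum.swap)
  also have "\<dots> = (\<Sum>j\<in>UNIV. \<Sum>k'<m. g j k' xstar)"
  proof (rule sum.cong[OF refl])
    fix j
    have p: "\<pi> j permutes {..<m}" using pi unfolding PP_def Perm_def by simp
    show "(\<Sum>k'<m. g j (\<pi> j k') xstar) = (\<Sum>k'<m. g j k' xstar)"
      using sum.permute[OF p, of "\<lambda>k. g j k xstar"] by (simp add: o_def)
  qed
  also have "\<dots> = 0" by (rule gz)
  finally show ?thesis unfolding ysh_def by simp
qed

definition "M2 = (1/nn) * (\<Sum>j\<in>UNIV. \<Sum>l<m. (norm (g j l xstar))^2)"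
definition "sig = M2 / real m"

lemma M2_nonneg: "M2 \<ge> 0" unfolding M2_def using nn_pos by (simp add: sum_nonneg)
lemma sig_nonneg: "sig \<ge> 0" unfolding sig_def using M2_nonneg by simp
lemma m_pos': "real m > 0" using m_pos by simp

lemma var_le:
  fixes x :: "nat \<Rightarrow> 'a"
  shows "(\<Sum>l<m. (norm (x l - (1/real m) *\<^sub>R (\<Sum>k<m. x k)))^2) \<le> (\<Sum>l<m. (norm (x l))^2)"
proof -
  define c where "c = (1/real m) *\<^sub>R (\<Sum>k<m. x k)"
  have sx: "(\<Sum>k<m. x k) = real m *\<^sub>R c" unfolding c_def using m_pos' by simp
  have "(\<Sum>l<m. (norm (x l - c))^2) = (\<Sum>l<m. (norm (x l))^2 - 2 * (x l \<bullet> c) + (norm c)^2)"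
    by (simp add: norm_diff_sq)
  also have "\<dots> = (\<Sum>l<m. (norm (x l))^2) - 2 * ((\<Sum>l<m. x l) \<bullet> c) + real m * (norm c)^2"
    by (simp add: sum.distrib sum_subtractf sum_distrib_left inner_sum_left)
  also have "\<dots> = (\<Sum>l<m. (norm (x l))^2) - real m * (norm c)^2"
    unfolding sx by (simp add: power2_norm_eq_inner)
  also have "\<dots> \<le> (\<Sum>l<m. (norm (x l))^2)" by simp
  finally show ?thesis unfolding c_def .
qed

lemma Esg:
  assumes l: "l < m"
  shows "avgset (PP m) (\<lambda>\<pi>. Sg \<pi> l / nn) = sig"
proof -
  have "avgset (PP m) (\<lambda>\<pi>. Sg \<pi> l / nn) = (1/nn) * avgset (PP m) (\<lambda>\<pi>. Sg \<pi> l)"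
    using avgset_cmult[of "PP m" "1/nn" "\<lambda>\<pi>. Sg \<pi> l"] by simp
  also have "avgset (PP m) (\<lambda>\<pi>. Sg \<pi> l) = (\<Sum>j\<in>UNIV. avgset (PP m) (\<lambda>\<pi>. (norm (g j (\<pi> j l) xstar))^2))"
    unfolding Sg_def by (rule avgset_sum)
  also have "\<dots> = (\<Sum>j\<in>UNIV. avgset (Perm m) (\<lambda>p. (norm (g j (p l) xstar))^2))"
    by (rule sum.cong[OF refl]) (rule PP_marginal[where \<phi>="\<lambda>p. (norm (g _ (p l) xstar))^2"])
  also have "\<dots> = (\<Sum>j\<in>UNIV. (1/real m) * (\<Sum>k<m. (norm (g j k xstar))^2))"
  proof (rule sum.cong[OF refl])
    fix j
    have c: "real (card (Perm m)) > 0" using Perm_card_pos by simp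
    show "avgset (Perm m) (\<lambda>p. (norm (g j (p l) xstar))^2) = (1/real m) * (\<Sum>k<m. (norm (g j k xstar))^2)"
      using Perm_marginal[OF l, of "\<lambda>k. (norm (g j k xstar))^2"] c by (simp add: avgset_def)
  qed
  also have "(1/nn) * \<dots> = sig" unfolding sig_def M2_def by (simp add: sum_divide_distrib[symmetric])
  finally show ?thesis .
qed

lemma Esy:
  assumes l: "l \<le> m"
  shows "avgset (PP m) (\<lambda>\<pi>. Sy \<pi> l) \<le> \<alpha>^2 * M2"
proof -
  define gb where "gb j = (1/real m) *\<^sub>R (\<Sum>k<m. g j k xstar)" for j
  define c where "c j k = g j k xstar - gb j" for j k
  define v where "v j p = (\<Sum>k<l. c j (p k))" for j and p :: "nat \<Rightarrow> nat"
  have gb0: "(\<Sum>j\<in>UNIV. gb j) = 0" unfolding gb_def using gz by (simp add: scaleR_sum_right[symmetric])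
  have c0: "(\<Sum>k<m. c j k) = 0" for j
    unfolding c_def gb_def using m_pos' by (simp add: sum_subtractf sum_constant_scaleR)
  have pt: "Sy \<pi> l \<le> (\<alpha>/nn)^2 * (nn * (\<Sum>j\<in>UNIV. (norm (v j (\<pi> j)))^2))" if pi: "\<pi> \<in> PP m" for \<pi>
  proof -
    have "(\<Sum>k<l. \<Sum>j\<in>UNIV. g j (\<pi> j k) xstar) = (\<Sum>j\<in>UNIV. \<Sum>k<l. c j (\<pi> j k) + gb j)"
      unfolding c_def by (subst sum.swap) simp
    also have "\<dots> = (\<Sum>j\<in>UNIV. v j (\<pi> j)) + real l *\<^sub>R (\<Sum>j\<in>UNIV. gb j)"
      unfolding v_def by (simp add: sum.distrib scaleR_sum_right sum_constant_scaleR)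
    finally have S: "(\<Sum>k<l. \<Sum>j\<in>UNIV. g j (\<pi> j k) xstar) = (\<Sum>j\<in>UNIV. v j (\<pi> j))" using gb0 by simp
    have "Sy \<pi> l = (\<alpha>/nn)^2 * (norm (\<Sum>j\<in>UNIV. v j (\<pi> j)))^2"
      unfolding Sy_def ysh_def S using alpha_pos nn_pos by (simp add: power_mult_distrib power_divide)
    also have "\<dots> \<le> (\<alpha>/nn)^2 * (nn * (\<Sum>j\<in>UNIV. (norm (v j (\<pi> j)))^2))"
      using norm_sum_sq[of UNIV "\<lambda>j. v j (\<pi> j)"] unfolding nn_def by (intro mult_left_mono) auto
    finally show ?thesis .
  qed
  have "avgset (PP m) (\<lambda>\<pi>. Sy \<pi> l) \<le> avgset (PP m) (\<lambda>\<pi>. (\<alpha>/nn)^2 * (nn * (\<Sum>j\<in>UNIV. (norm (v j (\<pi> j)))^2)))"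
    by (rule avgset_mono[OF PP_finite pt])
  also have "\<dots> = (\<alpha>/nn)^2 * (nn * (\<Sum>j\<in>UNIV. avgset (Perm m) (\<lambda>p. (norm (v j p))^2)))"
  proof -
    have "(\<Sum>j\<in>UNIV. avgset (PP m) (\<lambda>\<pi>. (norm (v j (\<pi> j)))^2)) = (\<Sum>j\<in>UNIV. avgset (Perm m) (\<lambda>p. (norm (v j p))^2))"
      by (rule sum.cong[OF refl]) (rule PP_marginal[where \<phi>="\<lambda>p. (norm (v _ p))^2"])
    then show ?thesis by (simp add: avgset_cmult avgset_sum)
  qed
  also have "\<dots> \<le> (\<alpha>/nn)^2 * (nn * (\<Sum>j\<in>UNIV. \<Sum>k<m. (norm (g j k xstar))^2))"
  proof (intro mult_left_mono sum_mono)
    fix j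
    have cp: "real (card (Perm m)) > 0" using Perm_card_pos by simp
    have "avgset (Perm m) (\<lambda>p. (norm (v j p))^2) \<le> (\<Sum>k<m. (norm (c j k))^2)"
      unfolding avgset_def v_def using Perm_partial_sum[OF c0 l, of j] cp by (simp add: pos_divide_le_eq mult.commute)
    also have "\<dots> \<le> (\<Sum>k<m. (norm (g j k xstar))^2)"
      unfolding c_def gb_def by (rule var_le)
    finally show "avgset (Perm m) (\<lambda>p. (norm (v j p))^2) \<le> (\<Sum>k<m. (norm (g j k xstar))^2)" .
  qed (use nn_pos in auto)
  also have "\<dots> = \<alpha>^2 * M2" unfolding M2_def using nn_pos by (simp add: power2_eq_square field_simps)
  finally show ?thesis .
qed

definition "N0 = 2*(\<alpha>*L)*(\<alpha>^2*M2) + (w*bc)* sig"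
definition "Nv = N0 / (\<alpha>*\<mu>/2)"
definition "V0 X = (norm (avg_pt X - xstar))^2 + w * (consensus_err X / nn)"
definition "kap = ac / (1 - qc)"
definition "kap0 = (ac * (Nv + \<alpha>^2*M2) + bc* sig) / (1 - qc)"
definition "Kc V = kap * V + kap0"

lemma N0_nonneg: "N0 \<ge> 0" unfolding N0_def using alpha_pos L_pos M2_nonneg w_nonneg bc_nonneg sig_nonneg by simp
lemma Nv_nonneg: "Nv \<ge> 0" unfolding Nv_def using N0_nonneg alpha_pos mu_pos by simp
lemma N0_eq: "N0 = (1 - q) * Nv" unfolding Nv_def q_def using alpha_pos mu_pos by simp
lemma V0_nonneg: "V0 X \<ge> 0" unfolding V0_def
  by (intro add_nonneg_nonneg zero_le_power2 mult_nonneg_nonneg w_nonneg divide_nonneg_pos consensus_err_nonneg nn_pos)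
lemma avgPP_const: "avgset (PP m :: ('n \<Rightarrow> nat \<Rightarrow> nat) set) (\<lambda>\<pi>. c) = c"
  by (rule avgset_const[OF PP_finite PP_ne])
lemma kap_nonneg: "kap \<ge> 0" unfolding kap_def using ac_nonneg qc_bounds by simp
lemma Kc_eq: "(1 - qc) * Kc V = ac * (V + Nv + \<alpha>^2*M2) + bc* sig"
proof -
  have d: "1 - qc \<noteq> 0" using qc_bounds by simp
  have e: "(1-qc)*kap = ac" "(1-qc)*kap0 = ac * (Nv + \<alpha>^2*M2) + bc * sig"
    unfolding kap_def kap0_def using d by simp_all
  have "(1 - qc) * Kc V = ((1-qc)*kap) * V + (1-qc)*kap0" unfolding Kc_def by (simp add: algebra_simps)
  then show ?thesis unfolding e by (simp add: algebra_simps)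
qed
lemma Kc_mono: "V \<le> V' \<Longrightarrow> Kc V \<le> Kc V'" unfolding Kc_def using kap_nonneg by (simp add: mult_left_mono)

lemma Vk_0: "Vk \<pi> X 0 = V0 X"
  unfolding Vk_def Ek_def Cnk_def V0_def Xs_def ysh_0 by simp

lemma EV:
  assumes "l \<le> m"
  shows "avgset (PP m) (\<lambda>\<pi>. Vk \<pi> X l) \<le> q^l * V0 X + (1 - q^l) * Nv"
  using assms
proof (induction l)
  case 0
  then show ?case unfolding Vk_0 by (simp add: avgPP_const)
next
  case (Suc l)
  then have l: "l < m" by simp
  have "avgset (PP m) (\<lambda>\<pi>. Vk \<pi> X (Suc l))
      \<le> avgset (PP m) (\<lambda>\<pi>. q * Vk \<pi> X l + (2*(\<alpha>*L) * Sy \<pi> l + (w*bc) * (Sg \<pi> l / nn)))"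
    using V_step[OF _ l] by (intro avgset_mono[OF PP_finite]) (simp add: add.assoc)
  also have "\<dots> = q * avgset (PP m) (\<lambda>\<pi>. Vk \<pi> X l) + (2*(\<alpha>*L) * avgset (PP m) (\<lambda>\<pi>. Sy \<pi> l)
      + (w*bc) * avgset (PP m) (\<lambda>\<pi>. Sg \<pi> l / nn))"
    by (simp only: avgset_add avgset_cmult)
  also have "\<dots> \<le> q * (q^l * V0 X + (1 - q^l) * Nv) + (2*(\<alpha>*L) * (\<alpha>^2 * M2) + (w*bc) * sig)"
  proof -
    have b1: "q * avgset (PP m) (\<lambda>\<pi>. Vk \<pi> X l) \<le> q * (q^l * V0 X + (1 - q^l) * Nv)"
      using Suc.IH l q_bounds by (intro mult_left_mono) auto
    have b2: "2*(\<alpha>*L) * avgset (PP m) (\<lambda>\<pi>. Sy \<pi> l) \<le> 2*(\<alpha>*L) * (\<alpha>^2 * M2)"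
      using Esy[of l] l alpha_pos L_pos by (intro mult_left_mono) auto
    show ?thesis unfolding Esg[OF l] using b1 b2 by linarith
  qed
  also have "\<dots> = q^(Suc l) * V0 X + (1 - q^(Suc l)) * Nv"
    using N0_eq unfolding N0_def by (simp add: algebra_simps)
  finally show ?case .
qed

lemma EC:
  assumes "l \<le> m"
  shows "avgset (PP m) (\<lambda>\<pi>. Cnk \<pi> X l) \<le> qc^l * (consensus_err X / nn) + (1 - qc^l) * Kc (V0 X)"
  using assms
proof (induction l)
  case 0
  then show ?case unfolding Cnk_def Xs_def by (simp add: avgPP_const)
next
  case (Suc l)
  then have l: "l < m" by simp
  have pt: "Cnk \<pi> X (Suc l) \<le> qc * Cnk \<pi> X l + (ac * Vk \<pi> X l + ac * Sy \<pi> l + bc * (Sg \<pi> l / nn))"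
    if pi: "\<pi> \<in> PP m" for \<pi>
  proof -
    have "ac * Ek \<pi> X l \<le> ac * Vk \<pi> X l" using Ek_le_Vk ac_nonneg by (intro mult_left_mono)
    then show ?thesis using C_step_n[OF pi l, of X] by (simp add: algebra_simps)
  qed
  have "avgset (PP m) (\<lambda>\<pi>. Cnk \<pi> X (Suc l))
      \<le> avgset (PP m) (\<lambda>\<pi>. qc * Cnk \<pi> X l + (ac * Vk \<pi> X l + ac * Sy \<pi> l + bc * (Sg \<pi> l / nn)))"
    using pt by (intro avgset_mono[OF PP_finite])
  also have "\<dots> = qc * avgset (PP m) (\<lambda>\<pi>. Cnk \<pi> X l) + (ac * avgset (PP m) (\<lambda>\<pi>. Vk \<pi> X l)
      + ac * avgset (PP m) (\<lambda>\<pi>. Sy \<pi> l) + bc * avgset (PP m) (\<lambda>\<pi>. Sg \<pi> l / nn))"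
    by (simp only: avgset_add avgset_cmult)
  also have "\<dots> \<le> qc * (qc^l * (consensus_err X / nn) + (1 - qc^l) * Kc (V0 X)) + (1 - qc) * Kc (V0 X)"
  proof -
    have a1: "qc * avgset (PP m) (\<lambda>\<pi>. Cnk \<pi> X l) \<le> qc * (qc^l * (consensus_err X / nn) + (1 - qc^l) * Kc (V0 X))"
      using Suc.IH l qc_bounds by (intro mult_left_mono) auto
    have "avgset (PP m) (\<lambda>\<pi>. Vk \<pi> X l) \<le> q^l * V0 X + (1 - q^l) * Nv" using EV l by simp
    also have "\<dots> \<le> V0 X + Nv"
    proof -
      have "q^l \<le> 1" "0 \<le> q^l" using q_bounds by (auto simp: power_le_one)
      then have "q^l * V0 X \<le> V0 X" "(1 - q^l) * Nv \<le> Nv"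
        using V0_nonneg[of X] Nv_nonneg by (auto simp: mult_left_le_one_le mult_le_cancel_right1)
      then show ?thesis by linarith
    qed
    finally have a2: "ac * avgset (PP m) (\<lambda>\<pi>. Vk \<pi> X l) \<le> ac * (V0 X + Nv)"
      using ac_nonneg by (intro mult_left_mono)
    have a3: "ac * avgset (PP m) (\<lambda>\<pi>. Sy \<pi> l) \<le> ac * (\<alpha>^2 * M2)"
      using Esy[of l] l ac_nonneg by (intro mult_left_mono) auto
    have a4: "avgset (PP m) (\<lambda>\<pi>. Sg \<pi> l / nn) = sig" by (rule Esg[OF l])
    have a5: "(1 - qc) * Kc (V0 X) = ac * (V0 X + Nv) + ac * (\<alpha>^2*M2) + bc* sig"
      unfolding Kc_eq by (simp add: algebra_simps)
    show ?thesis unfolding a4 using a1 a2 a3 a5 by linarith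
  qed
  also have "\<dots> = qc^(Suc l) * (consensus_err X / nn) + (1 - qc^(Suc l)) * Kc (V0 X)"
    by (simp add: algebra_simps)
  finally show ?case .
qed

lemma EpV: "avgset (PP m) (\<lambda>\<pi>. V0 (drr_inner W \<alpha> g \<pi> X m)) \<le> q^m * V0 X + (1 - q^m) * Nv"
proof -
  have "avgset (PP m) (\<lambda>\<pi>. V0 (drr_inner W \<alpha> g \<pi> X m)) = avgset (PP m) (\<lambda>\<pi>. Vk \<pi> X m)"
    unfolding avgset_def
    by (intro arg_cong2[where f="(/)"] sum.cong refl) (simp add: Vk_def Ek_def Cnk_def V0_def ysh_m Xs_def)
  also have "\<dots> \<le> q^m * V0 X + (1 - q^m) * Nv" by (rule EV) simp
  finally show ?thesis .
qed

lemma EpC: "avgset (PP m) (\<lambda>\<pi>. consensus_err (drr_inner W \<alpha> g \<pi> X m) / nn)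
    \<le> qc^m * (consensus_err X / nn) + (1 - qc^m) * Kc (V0 X)"
  using EC[of m X] unfolding Cnk_def Xs_def by simp

end


context drr_setup
begin

lemma sched_fin: "finite (schedules m t :: (nat \<Rightarrow> 'n \<Rightarrow> nat \<Rightarrow> nat) set)"
  using sched_finite_ne by blast

lemma sched_ne: "(schedules m t :: (nat \<Rightarrow> 'n \<Rightarrow> nat \<Rightarrow> nat) set) \<noteq> {}"
  using sched_finite_ne by blast

lemma es_mono: "(\<And>\<sigma>. \<sigma> \<in> (schedules m t :: (nat \<Rightarrow> 'n \<Rightarrow> nat \<Rightarrow> nat) set) \<Longrightarrow> h \<sigma> \<le> h' \<sigma>)
   \<Longrightarrow> expect_sched m t h \<le> expect_sched m t h'"
  unfolding expect_sched_avg by (rule avgset_mono[OF sched_fin])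

lemma es_lin: "expect_sched m t (\<lambda>\<sigma>::nat \<Rightarrow> 'n \<Rightarrow> nat \<Rightarrow> nat. a * h \<sigma> + b) = a * expect_sched m t h + b"
proof -
  have ne: "(schedules m t :: (nat \<Rightarrow> 'n \<Rightarrow> nat \<Rightarrow> nat) set) \<noteq> {}" using sched_finite_ne by blast
  show ?thesis unfolding expect_sched_avg
    by (simp only: avgset_add avgset_cmult avgset_const[OF sched_fin ne])
qed

lemma es_0: "expect_sched m 0 (h :: (nat \<Rightarrow> 'n \<Rightarrow> nat \<Rightarrow> nat) \<Rightarrow> real) = h (\<lambda>e i. id)"
  unfolding expect_sched_def sched_0 by (simp add: id_def)

lemma iter_upd_t: "drr_iter W \<alpha> g m (\<sigma>(t := \<pi>)) x0 t = drr_iter W \<alpha> g m \<sigma> x0 t"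
  by (rule drr_iter_cong) simp

lemma OV: "expect_sched m t (\<lambda>\<sigma>::nat \<Rightarrow> 'n \<Rightarrow> nat \<Rightarrow> nat. V0 (drr_iter W \<alpha> g m \<sigma> x0 t))
    \<le> q^(m*t) * V0 x0 + (1 - q^(m*t)) * Nv"
proof (induction t)
  case 0
  then show ?case by (simp add: es_0)
next
  case (Suc t)
  have "expect_sched m (Suc t) (\<lambda>\<sigma>::nat \<Rightarrow> 'n \<Rightarrow> nat \<Rightarrow> nat. V0 (drr_iter W \<alpha> g m \<sigma> x0 (Suc t)))
      = expect_sched m t (\<lambda>\<sigma>. avgset (PP m) (\<lambda>\<pi>. V0 (drr_inner W \<alpha> g \<pi> (drr_iter W \<alpha> g m \<sigma> x0 t) m)))"
    by (simp add: expect_sched_Suc iter_upd_t)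
  also have "\<dots> \<le> expect_sched m t (\<lambda>\<sigma>. q^m * V0 (drr_iter W \<alpha> g m \<sigma> x0 t) + (1 - q^m) * Nv)"
    by (rule es_mono) (rule EpV)
  also have "\<dots> = q^m * expect_sched m t (\<lambda>\<sigma>. V0 (drr_iter W \<alpha> g m \<sigma> x0 t)) + (1 - q^m) * Nv"
    by (rule es_lin)
  also have "\<dots> \<le> q^m * (q^(m*t) * V0 x0 + (1 - q^(m*t)) * Nv) + (1 - q^m) * Nv"
    using Suc.IH q_bounds by (intro add_right_mono mult_left_mono) auto
  also have "\<dots> = q^(m * Suc t) * V0 x0 + (1 - q^(m * Suc t)) * Nv"
    by (simp add: power_add algebra_simps)
  finally show ?case .
qed

lemma EV_le: "expect_sched m t (\<lambda>\<sigma>::nat \<Rightarrow> 'n \<Rightarrow> nat \<Rightarrow> nat. V0 (drr_iter W \<alpha> g m \<sigma> x0 t)) \<le> V0 x0 + Nv"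
proof -
  have "q^(m*t) \<le> 1" "0 \<le> q^(m*t)" using q_bounds by (auto simp: power_le_one)
  then have "q^(m*t) * V0 x0 \<le> V0 x0" "(1 - q^(m*t)) * Nv \<le> Nv"
    using V0_nonneg[of x0] Nv_nonneg by (auto simp: mult_left_le_one_le mult_le_cancel_right1)
  then show ?thesis using OV[of t x0] by linarith
qed

lemma OC: "expect_sched m t (\<lambda>\<sigma>::nat \<Rightarrow> 'n \<Rightarrow> nat \<Rightarrow> nat. consensus_err (drr_iter W \<alpha> g m \<sigma> x0 t) / nn)
    \<le> qc^(m*t) * (consensus_err x0 / nn) + (1 - qc^(m*t)) * Kc (V0 x0 + Nv)"
proof (induction t)
  case 0
  then show ?case by (simp add: es_0)
next
  case (Suc t)
  let ?X = "\<lambda>\<sigma>. drr_iter W \<alpha> g m \<sigma> x0 t"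
  have "expect_sched m (Suc t) (\<lambda>\<sigma>::nat \<Rightarrow> 'n \<Rightarrow> nat \<Rightarrow> nat. consensus_err (drr_iter W \<alpha> g m \<sigma> x0 (Suc t)) / nn)
      = expect_sched m t (\<lambda>\<sigma>. avgset (PP m) (\<lambda>\<pi>. consensus_err (drr_inner W \<alpha> g \<pi> (?X \<sigma>) m) / nn))"
    by (simp add: expect_sched_Suc iter_upd_t)
  also have "\<dots> \<le> expect_sched m t (\<lambda>\<sigma>. qc^m * (consensus_err (?X \<sigma>) / nn) + ((1 - qc^m) * kap * V0 (?X \<sigma>) + (1 - qc^m) * kap0))"
    by (rule es_mono) (rule order.trans[OF EpC], simp add: Kc_def algebra_simps)
  also have "\<dots> = qc^m * expect_sched m t (\<lambda>\<sigma>. consensus_err (?X \<sigma>) / nn)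
      + ((1 - qc^m) * kap * expect_sched m t (\<lambda>\<sigma>. V0 (?X \<sigma>)) + (1 - qc^m) * kap0)"
    unfolding expect_sched_avg by (simp only: avgset_add avgset_cmult avgset_const[OF sched_fin sched_ne])
  also have "\<dots> \<le> qc^m * (qc^(m*t) * (consensus_err x0 / nn) + (1 - qc^(m*t)) * Kc (V0 x0 + Nv))
      + ((1 - qc^m) * kap * (V0 x0 + Nv) + (1 - qc^m) * kap0)"
  proof -
    have k: "(1 - qc^m) * kap \<ge> 0" using qc_bounds kap_nonneg by (simp add: power_le_one)
    have c1: "qc^m * expect_sched m t (\<lambda>\<sigma>::nat \<Rightarrow> 'n \<Rightarrow> nat \<Rightarrow> nat. consensus_err (?X \<sigma>) / nn)
        \<le> qc^m * (qc^(m*t) * (consensus_err x0 / nn) + (1 - qc^(m*t)) * Kc (V0 x0 + Nv))"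
      using qc_bounds by (intro mult_left_mono[OF Suc.IH]) simp
    have c2: "(1 - qc^m) * kap * expect_sched m t (\<lambda>\<sigma>::nat \<Rightarrow> 'n \<Rightarrow> nat \<Rightarrow> nat. V0 (?X \<sigma>)) \<le> (1 - qc^m) * kap * (V0 x0 + Nv)"
      by (rule mult_left_mono[OF EV_le k])
    show ?thesis using c1 c2 by linarith
  qed
  also have "\<dots> = qc^(m * Suc t) * (consensus_err x0 / nn) + (1 - qc^(m * Suc t)) * Kc (V0 x0 + Nv)"
    unfolding Kc_def by (simp add: power_add algebra_simps)
  finally show ?case .
qed

lemma Kc_nonneg: "V \<ge> 0 \<Longrightarrow> Kc V \<ge> 0"
  unfolding Kc_def kap0_def using kap_nonneg ac_nonneg bc_nonneg Nv_nonneg M2_nonneg sig_nonneg qc_bounds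
  by (simp add: mult_nonneg_nonneg)

lemma main_bound:
  "(1/nn) * (\<Sum>i\<in>UNIV. expect_sched m t (\<lambda>\<sigma>::nat \<Rightarrow> 'n \<Rightarrow> nat \<Rightarrow> nat. (norm (drr_iter W \<alpha> g m \<sigma> x0 t i - xstar))^2))
   \<le> q^(m*t) * V0 x0 + Nv + qc^(m*t) * (consensus_err x0 / nn) + Kc (V0 x0 + Nv)"
proof -
  let ?X = "\<lambda>\<sigma>. drr_iter W \<alpha> g m \<sigma> x0 t"
  have "(1/nn) * (\<Sum>i\<in>UNIV. expect_sched m t (\<lambda>\<sigma>::nat \<Rightarrow> 'n \<Rightarrow> nat \<Rightarrow> nat. (norm (?X \<sigma> i - xstar))^2))
      = expect_sched m t (\<lambda>\<sigma>. (1/nn) * (\<Sum>i\<in>UNIV. (norm (?X \<sigma> i - xstar))^2))"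
    unfolding expect_sched_avg by (simp only: avgset_sum avgset_cmult)
  also have "\<dots> \<le> expect_sched m t (\<lambda>\<sigma>. V0 (?X \<sigma>) + consensus_err (?X \<sigma>) / nn)"
  proof (rule es_mono)
    fix \<sigma> :: "nat \<Rightarrow> 'n \<Rightarrow> nat \<Rightarrow> nat"
    have "(1/nn) * (\<Sum>i\<in>UNIV. (norm (?X \<sigma> i - xstar))^2) = (norm (avg_pt (?X \<sigma>) - xstar))^2 + consensus_err (?X \<sigma>) / nn"
      unfolding avg_decomp nn_def by (simp add: field_simps)
    also have "\<dots> \<le> V0 (?X \<sigma>) + consensus_err (?X \<sigma>) / nn"
    proof -
      have "0 \<le> w * (consensus_err (?X \<sigma>) / nn)"
        by (intro mult_nonneg_nonneg w_nonneg divide_nonneg_pos consensus_err_nonneg nn_pos)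
      then show ?thesis unfolding V0_def by simp
    qed
    finally show "(1/nn) * (\<Sum>i\<in>UNIV. (norm (?X \<sigma> i - xstar))^2) \<le> V0 (?X \<sigma>) + consensus_err (?X \<sigma>) / nn" .
  qed
  also have "\<dots> = expect_sched m t (\<lambda>\<sigma>. V0 (?X \<sigma>)) + expect_sched m t (\<lambda>\<sigma>. consensus_err (?X \<sigma>) / nn)"
    unfolding expect_sched_avg by (rule avgset_add)
  also have "\<dots> \<le> (q^(m*t) * V0 x0 + (1 - q^(m*t)) * Nv) + (qc^(m*t) * (consensus_err x0 / nn) + (1 - qc^(m*t)) * Kc (V0 x0 + Nv))"
    using OV OC by (rule add_mono)
  also have "\<dots> \<le> q^(m*t) * V0 x0 + Nv + qc^(m*t) * (consensus_err x0 / nn) + Kc (V0 x0 + Nv)"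
  proof -
    have "0 \<le> q^(m*t)" "0 \<le> qc^(m*t)" using q_bounds qc_bounds by auto
    moreover have "Kc (V0 x0 + Nv) \<ge> 0" by (intro Kc_nonneg add_nonneg_nonneg V0_nonneg Nv_nonneg)
    ultimately have "(1 - q^(m*t)) * Nv \<le> Nv" "(1 - qc^(m*t)) * Kc (V0 x0 + Nv) \<le> Kc (V0 x0 + Nv)"
      using Nv_nonneg by (auto simp: algebra_simps mult_nonneg_nonneg)
    then show ?thesis by linarith
  qed
  finally show ?thesis .
qed

end


context drr_setup
begin

lemma D_pos: "1 - r > 0" using r_lt1 by simp
lemma a3r: "1920 * (\<alpha>^2 * L^4) \<le> (1-r)^2 * \<mu>^2" using a3 unfolding r_def by (simp add: mult.assoc)
lemma M2_sig: "M2 = real m * sig" unfolding sig_def using m_pos' by simp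

lemma Nv_eq: "Nv = 4*\<alpha>^2/\<mu>*(real m*L + 64*r*L^2/(\<mu>*(1-r)^2))* sig"
proof -
  have d: "1 - r \<noteq> 0" using D_pos by simp
  have "Nv = (2*(\<alpha>*L)*(\<alpha>^2*(real m * sig)) + (16*\<alpha>*L^2/(\<mu>*(1-r)))*(8*r*\<alpha>^2/(1-r))* sig) / (\<alpha>*\<mu>/2)"
    unfolding Nv_def N0_def w_def bc_def M2_sig ..
  also have "\<dots> = 4*\<alpha>^2/\<mu>*(real m*L + 64*r*L^2/(\<mu>*(1-r)^2))* sig"
    using d alpha_pos mu_pos by (simp add: field_simps power2_eq_square)
  finally show ?thesis .
qed

lemma Nv_le: "Nv \<le> 4*\<alpha>^2/\<mu>*(real m*L + 240*r*L^2/(\<mu>*(1-r)^2))* sig"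
proof -
  have "64*r*L^2/(\<mu>*(1-r)^2) \<le> 240*r*L^2/(\<mu>*(1-r)^2)"
    using r_ge0 mu_pos D_pos by (intro divide_right_mono) auto
  then have "real m*L + 64*r*L^2/(\<mu>*(1-r)^2) \<le> real m*L + 240*r*L^2/(\<mu>*(1-r)^2)" by simp
  moreover have "0 \<le> 4*\<alpha>^2/\<mu>" using mu_pos by simp
  ultimately have "4*\<alpha>^2/\<mu>*(real m*L + 64*r*L^2/(\<mu>*(1-r)^2)) \<le> 4*\<alpha>^2/\<mu>*(real m*L + 240*r*L^2/(\<mu>*(1-r)^2))"
    by (rule mult_left_mono)
  then show ?thesis unfolding Nv_eq using sig_nonneg by (rule mult_right_mono)
qed

lemma Kc_form: "Kc V = \<alpha>^2/(1-r)^2 * (32*r*L^2*(V + Nv + \<alpha>^2*(real m* sig)) + 16*r* sig)"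
proof -
  have d: "1 - r \<noteq> 0" using D_pos by simp
  have "(1 - qc) * Kc V = ac * (V + Nv + \<alpha>^2*M2) + bc * sig" by (rule Kc_eq)
  then have "Kc V = (ac * (V + Nv + \<alpha>^2*M2) + bc * sig) / (1 - qc)" using qc_bounds by (simp add: field_simps)
  also have "\<dots> = \<alpha>^2/(1-r)^2 * (32*r*L^2*(V + Nv + \<alpha>^2*(real m* sig)) + 16*r* sig)"
  proof -
    define k where "k = 1/(1-r)"
    have e: "ac = 16*r*\<alpha>^2*L^2*k" "bc = 8*r*\<alpha>^2*k" "1/(1-qc) = 2*k" "\<alpha>^2/(1-r)^2 = \<alpha>^2*k^2"
      unfolding ac_def bc_def qc_def k_def using d by (simp_all add: field_simps power2_eq_square)
    have "(ac * (V + Nv + \<alpha>^2*M2) + bc * sig) / (1 - qc) = (ac * (V + Nv + \<alpha>^2*M2) + bc * sig) * (1/(1 - qc))"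
      by simp
    also have "\<dots> = \<alpha>^2*k^2 * (32*r*L^2*(V + Nv + \<alpha>^2*(real m* sig)) + 16*r* sig)"
      unfolding e M2_sig by (simp add: algebra_simps power2_eq_square)
    finally show ?thesis unfolding e .
  qed
  finally show ?thesis .
qed

lemma p3: "64*r*L^2*Nv \<le> (256/1920)*(real m* sig) + (16384/1920)* sig"
proof -
  define D where "D = 1 - r"
  define Z where "Z = \<alpha>^2 * L^4"
  have D: "0 < D" "D \<le> 1" unfolding D_def using D_pos r_ge0 by auto
  have Z: "1920 * Z \<le> D^2 * \<mu>^2" unfolding Z_def D_def using a3r by simp
  have Z0: "Z \<ge> 0" unfolding Z_def by simp
  have ms: "real m * sig \<ge> 0" using sig_nonneg by simp
  have eq: "64*r*L^2*Nv = (256*r*(real m* sig)/(\<mu>*L)) * Z + (16384*r^2* sig/(\<mu>^2*D^2)) * Z"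
    unfolding Nv_eq Z_def D_def[symmetric] using mu_pos L_pos D by (simp add: field_simps power2_eq_square power4_eq_xxxx)
  have c1: "0 \<le> 256*r*(real m* sig)/(\<mu>*L)" using r_ge0 ms mu_pos L_pos by simp
  have c2: "0 \<le> 16384*r^2* sig/(\<mu>^2*D^2)" using sig_nonneg by simp
  have t1: "(256*r*(real m* sig)/(\<mu>*L)) * Z \<le> (256/1920)*(real m* sig)"
  proof -
    have "(256*r*(real m* sig)/(\<mu>*L)) * Z \<le> (256*r*(real m* sig)/(\<mu>*L)) * (D^2*\<mu>^2/1920)"
      using Z c1 by (intro mult_left_mono) auto
    also have "\<dots> = (256/1920) * (r * D^2 * (\<mu>/L)) * (real m* sig)"
      using mu_pos L_pos by (simp add: field_simps power2_eq_square)
    also have "\<dots> \<le> (256/1920) * 1 * (real m* sig)"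
    proof -
      have "r * D^2 * (\<mu>/L) \<le> 1 * 1 * 1"
        using r_ge0 r_lt1 D mu_pos mu_le_L L_pos
        by (intro mult_mono) (auto simp: power_le_one)
      then show ?thesis using ms by (intro mult_right_mono mult_left_mono) auto
    qed
    finally show ?thesis by simp
  qed
  have t2: "(16384*r^2* sig/(\<mu>^2*D^2)) * Z \<le> (16384/1920)* sig"
  proof -
    have "(16384*r^2* sig/(\<mu>^2*D^2)) * Z \<le> (16384*r^2* sig/(\<mu>^2*D^2)) * (D^2*\<mu>^2/1920)"
      using Z c2 by (intro mult_left_mono) auto
    also have "\<dots> = (16384/1920) * r^2 * sig" using mu_pos D by (simp add: field_simps)
    also have "\<dots> \<le> (16384/1920) * 1 * sig"
      using r_ge0 r_lt1 sig_nonneg by (intro mult_right_mono mult_left_mono) (auto simp: power_le_one)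
    finally show ?thesis by simp
  qed
  show ?thesis unfolding eq using t1 t2 by linarith
qed

lemma p4: "32*r*L^2*(\<alpha>^2*(real m* sig)) \<le> (32/1920)*(real m* sig)"
proof -
  have ms: "real m * sig \<ge> 0" using sig_nonneg by simp
  have "\<alpha>^2*L^2 \<le> 1/1920"
  proof -
    have "(1-r)^2 \<le> 1" using r_ge0 r_lt1 by (simp add: power_le_one)
    then show ?thesis using a2L2 by simp
  qed
  then have "r * (\<alpha>^2*L^2) \<le> 1 * (1/1920)" using r_ge0 r_lt1 by (intro mult_mono) auto
  then have "32*(r*(\<alpha>^2*L^2))*(real m* sig) \<le> 32*(1/1920)*(real m* sig)"
    using ms by (intro mult_right_mono mult_left_mono) auto
  then show ?thesis by (simp add: algebra_simps)
qed

lemma p5: "3360*(real m* sig) + 3360* sig \<le> 120*L^2*(28*(real m*\<mu> + L)* sig/(\<mu>*L^2))/(1-r)"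
proof -
  have ms: "real m * sig \<ge> 0" using sig_nonneg by simp
  have eq: "120*L^2*(28*(real m*\<mu> + L)* sig/(\<mu>*L^2))/(1-r) = (3360*(real m* sig) + 3360*(L/\<mu>)* sig)/(1-r)"
  proof -
    have "120*L^2*(28*(real m*\<mu> + L)* sig/(\<mu>*L^2)) = 3360*(real m* sig) + 3360*(L/\<mu>)* sig"
      using mu_pos L_pos by (simp add: field_simps power2_eq_square)
    then show ?thesis by simp
  qed
  have "3360* sig \<le> 3360*(L/\<mu>)* sig" using mu_pos mu_le_L sig_nonneg by (simp add: field_simps mult_right_mono)
  then have "3360*(real m* sig) + 3360* sig \<le> 3360*(real m* sig) + 3360*(L/\<mu>)* sig" by simp
  also have "\<dots> \<le> (3360*(real m* sig) + 3360*(L/\<mu>)* sig)/(1-r)"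
  proof -
    define X where "X = 3360*(real m* sig) + 3360*(L/\<mu>)* sig"
    have x0: "0 \<le> X" unfolding X_def using ms sig_nonneg mu_pos L_pos by simp
    have "X*(1-r) \<le> X*1" using x0 r_ge0 by (intro mult_left_mono) auto
    then have "X \<le> X/(1-r)" using D_pos by (simp add: le_divide_eq)
    then show ?thesis unfolding X_def .
  qed
  finally show ?thesis unfolding eq .
qed

lemma Kc_le:
  assumes H: "H \<ge> 0"
  shows "Kc (H + Nv) \<le> 4 * (30*nn*L^2/(1-r)*(H + 28*(real m*\<mu> + L)* sig/(\<mu>*L^2))
            + 15*nn*r/(1-r)* sig + real m*nn*\<mu>*(1-r)/(8*L)* sig) / (nn*(1-r)^2) * \<alpha>^2"
proof -
  define D where "D = 1 - r"
  have D: "0 < D" "D \<le> 1" unfolding D_def using D_pos r_ge0 by auto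
  define B where "B = 32*r*L^2*(H + Nv + Nv + \<alpha>^2*(real m* sig)) + 16*r* sig"
  define R where "R = 120*L^2*H/D + 120*L^2*(28*(real m*\<mu> + L)* sig/(\<mu>*L^2))/D + 60*r* sig/D
                      + real m*\<mu>*D* sig/(2*L)"
  have K: "Kc (H + Nv) = \<alpha>^2/D^2 * B" unfolding Kc_form B_def D_def by (simp add: add.assoc)
  have RR: "4 * (30*nn*L^2/(1-r)*(H + 28*(real m*\<mu> + L)* sig/(\<mu>*L^2))
            + 15*nn*r/(1-r)* sig + real m*nn*\<mu>*(1-r)/(8*L)* sig) / (nn*(1-r)^2) * \<alpha>^2 = \<alpha>^2/D^2 * R"
    unfolding R_def D_def[symmetric] using nn_pos D L_pos mu_pos by (simp add: field_simps power2_eq_square)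
  have p1: "32*r*L^2*H \<le> 120*L^2*H/D"
  proof -
    have "32*r*L^2*H \<le> 120*L^2*H" using r_ge0 r_lt1 H by (intro mult_right_mono) auto
    also have "\<dots> \<le> 120*L^2*H/D" using D H by (simp add: le_divide_eq mult_left_le)
    finally show ?thesis .
  qed
  have p2: "16*r* sig \<le> 60*r* sig/D"
  proof -
    have "16*r* sig \<le> 60*r* sig" using r_ge0 sig_nonneg by (intro mult_right_mono) auto
    also have "\<dots> \<le> 60*r* sig/D" using D r_ge0 sig_nonneg by (simp add: le_divide_eq mult_left_le)
    finally show ?thesis .
  qed
  have p6: "0 \<le> real m*\<mu>*D* sig/(2*L)" using mu_pos D sig_nonneg L_pos by simp
  have p3': "64*r*L^2*Nv \<le> (256/1920)*(real m* sig) + (16384/1920)* sig" by (rule p3)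
  have p5': "3360*(real m* sig) + 3360* sig \<le> 120*L^2*(28*(real m*\<mu> + L)* sig/(\<mu>*L^2))/D"
    unfolding D_def by (rule p5)
  have Bexp: "B = 32*r*L^2*H + 64*r*L^2*Nv + 32*r*L^2*(\<alpha>^2*(real m* sig)) + 16*r* sig"
    unfolding B_def by (simp add: algebra_simps)
  have ms: "real m * sig \<ge> 0" "sig \<ge> 0" using sig_nonneg by auto
  have "B \<le> R" unfolding Bexp R_def using p1 p2 p3' p4 p5' p6 ms by linarith
  then have "\<alpha>^2/D^2 * B \<le> \<alpha>^2/D^2 * R" by (intro mult_left_mono) auto
  then show ?thesis unfolding K RR .
qed

end


lemma grad_zero:
  fixes f :: "'n::finite \<Rightarrow> nat \<Rightarrow> 'a::euclidean_space \<Rightarrow> real" and g :: "'n \<Rightarrow> nat \<Rightarrow> 'a \<Rightarrow> 'a"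
  assumes m_pos: "m \<ge> 1"
    and grad: "\<And>i l x. l < m \<Longrightarrow> (f i l has_derivative (\<lambda>h. g i l x \<bullet> h)) (at x)"
    and lip: "\<And>i l. l < m \<Longrightarrow> L-lipschitz_on UNIV (g i l)"
    and L_pos: "L > 0"
    and xstar_min: "\<And>y. (1 / real CARD('n)) * (\<Sum>i\<in>UNIV. (1 / real m) * (\<Sum>l<m. f i l xstar))
                      \<le> (1 / real CARD('n)) * (\<Sum>i\<in>UNIV. (1 / real m) * (\<Sum>l<m. f i l y))"
  shows "(\<Sum>i\<in>UNIV. \<Sum>l<m. g i l xstar) = 0"
proof -
  define F where "F y = (\<Sum>i\<in>UNIV. \<Sum>l<m. f i l y)" for y
  define G where "G = (\<Sum>i\<in>UNIV. \<Sum>l<m. g i l xstar)"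
  define K where "K = real CARD('n) * real m * L"
  have K: "K > 0" unfolding K_def using m_pos L_pos by simp
  have c: "(1 / real CARD('n)) * (\<Sum>i\<in>UNIV. (1 / real m) * (\<Sum>l<m. f i l y)) = F y / (real CARD('n) * real m)" for y
    unfolding F_def by (simp add: sum_divide_distrib[symmetric])
  have min: "F xstar \<le> F y" for y
  proof -
    have "F xstar / (real CARD('n) * real m) \<le> F y / (real CARD('n) * real m)" using xstar_min[of y] unfolding c .
    then show ?thesis using m_pos by (simp add: divide_le_cancel)
  qed
  have up: "F y \<le> F xstar + G \<bullet> (y - xstar) + K / 2 * (norm (y - xstar))^2" for y
  proof -
    have "F y \<le> (\<Sum>i\<in>UNIV. \<Sum>l<m. f i l xstar + g i l xstar \<bullet> (y - xstar) + L / 2 * (norm (y - xstar))^2)"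
      unfolding F_def
      by (intro sum_mono) (rule smooth_upper[OF grad lip], auto)
    also have "\<dots> = F xstar + G \<bullet> (y - xstar) + K / 2 * (norm (y - xstar))^2"
    proof -
      obtain d where d: "d = y - xstar" by blast
      obtain X where X: "X = (norm (y - xstar))^2" by blast
      have "(\<Sum>i\<in>UNIV. \<Sum>l<m. f i l xstar + g i l xstar \<bullet> d + L / 2 * X)
          = (\<Sum>i\<in>UNIV. \<Sum>l<m. f i l xstar) + (\<Sum>i\<in>UNIV. \<Sum>l<m. g i l xstar) \<bullet> d + (\<Sum>i\<in>(UNIV::'n set). \<Sum>l<m. L / 2 * X)"
        by (simp add: sum.distrib inner_sum_left)
      also have "(\<Sum>i\<in>(UNIV::'n set). \<Sum>l<m. L / 2 * X) = K / 2 * X" unfolding K_def by simp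
      finally show ?thesis unfolding F_def G_def d X .
    qed
    finally show ?thesis .
  qed
  define s where "s = 1 / K"
  have s: "s > 0" unfolding s_def using K by simp
  have "F xstar \<le> F (xstar - s *\<^sub>R G)" by (rule min)
  also have "\<dots> \<le> F xstar + G \<bullet> (- s *\<^sub>R G) + K / 2 * (norm (- s *\<^sub>R G))^2"
    using up[of "xstar - s *\<^sub>R G"] by simp
  also have "\<dots> = F xstar - s / 2 * (norm G)^2"
  proof -
    have e1: "G \<bullet> (- s *\<^sub>R G) = - s * (norm G)^2" by (simp add: power2_norm_eq_inner)
    have e2: "(norm (- s *\<^sub>R G))^2 = s^2 * (norm G)^2" using s by (simp add: power_mult_distrib)
    have e3: "K / 2 * s^2 = s / 2" unfolding s_def using K by (simp add: power2_eq_square)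
    show ?thesis unfolding e1 e2 using e3 by (simp add: algebra_simps)
  qed
  finally have "s / 2 * (norm G)^2 \<le> 0" by simp
  then have "(norm G)^2 \<le> 0" using s by (simp add: mult_le_0_iff)
  then show ?thesis unfolding G_def by simp
qed

theorem theorem2:
  fixes W :: "real^'n::finite^'n"
    and f :: "'n \<Rightarrow> nat \<Rightarrow> 'a::euclidean_space \<Rightarrow> real"
    and g :: "'n \<Rightarrow> nat \<Rightarrow> 'a \<Rightarrow> 'a"
    and m :: nat and \<mu> L \<alpha> :: real and xstar :: 'a and x0 :: "'n \<Rightarrow> 'a"
  assumes m_pos: "m \<ge> 1"
    and grad: "\<And>i l x. l < m \<Longrightarrow> (f i l has_derivative (\<lambda>h. g i l x \<bullet> h)) (at x)"
    and mu_pos: "0 < \<mu>" and mu_le_L: "\<mu> \<le> L"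
    and sconv: "\<And>i l. l < m \<Longrightarrow> strongly_convex \<mu> (f i l)"
    and lip: "\<And>i l. l < m \<Longrightarrow> L-lipschitz_on UNIV (g i l)"
    and W_nonneg: "\<And>i j. W$i$j \<ge> 0"
    and W_sym: "\<And>i j. W$i$j = W$j$i"
    and W_stoch: "\<And>i. (\<Sum>j\<in>UNIV. W$i$j) = 1"
    and W_conn: "mixing_graph_connected W"
    and xstar_min: "\<And>y. (1 / real CARD('n)) * (\<Sum>i\<in>UNIV. (1 / real m) * (\<Sum>l<m. f i l xstar))
                      \<le> (1 / real CARD('n)) * (\<Sum>i\<in>UNIV. (1 / real m) * (\<Sum>l<m. f i l y))"
    and alpha_pos: "0 < \<alpha>"
    and alpha1: "rho_w W = 0 \<or>
        \<alpha> \<le> sqrt ((2 - (rho_w W)^2) / (24 * (rho_w W)^2 * (5 - (rho_w W)^2))) * (1 - (rho_w W)^2) / L"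
    and alpha2: "\<alpha> \<le> (1 - (rho_w W)^2) / (2 * \<mu>)"
    and alpha3: "\<alpha> \<le> (1 - (rho_w W)^2) * \<mu> / (8 * sqrt 30 * L^2)"
  shows "let n = real CARD('n); \<rho> = rho_w W;
             \<sigma>2 = (1 / (real m * n)) * (\<Sum>i\<in>UNIV. \<Sum>l<m. (norm (g i l xstar))^2);
             \<omega> = 16 * \<alpha> * L^2 / (n * \<mu> * (1 - \<rho>^2));
             H0 = (norm (avg_pt x0 - xstar))^2 + \<omega> * consensus_err x0;
             X0h = H0 + 28 * (real m * \<mu> + L) * \<sigma>2 / (\<mu> * L^2);
             X1h = 30 * n * L^2 / (1 - \<rho>^2) * X0h + 15 * n * \<rho>^2 / (1 - \<rho>^2) * \<sigma>2
                   + real m * n * \<mu> * (1 - \<rho>^2) / (8 * L) * \<sigma>2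
         in \<forall>t. (1 / n) * (\<Sum>i\<in>UNIV. expect_sched m t
                      (\<lambda>\<sigma>. (norm (drr_iter W \<alpha> g m \<sigma> x0 t i - xstar))^2))
               \<le> (1 - \<alpha> * \<mu> / 4) ^ (m * t) * H0
                 + 4 * \<alpha>^2 / \<mu> * (real m * L + 240 * \<rho>^2 * L^2 / (\<mu> * (1 - \<rho>^2)^2)) * \<sigma>2
                 + ((1 + \<rho>^2) / 2) ^ (m * t) * consensus_err x0 / n
                 + 4 * X1h / (n * (1 - \<rho>^2)^2) * \<alpha>^2"

proof -
  have L_pos: "L > 0" using mu_pos mu_le_L by simp
  define \<rho> where "\<rho> = rho_w W"
  have r1: "\<rho>^2 < 1"
  proof -
    have "0 < (1 - \<rho>^2) / (2 * \<mu>)" using alpha_pos alpha2 unfolding \<rho>_def by linarith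
    then show ?thesis using mu_pos by (simp add: zero_less_divide_iff)
  qed
  have a2': "\<alpha> * \<mu> \<le> (1 - \<rho>^2) / 2"
    using alpha2 mu_pos unfolding \<rho>_def[symmetric] by (simp add: le_divide_eq field_simps)
  have a3': "1920 * \<alpha>^2 * L^4 \<le> (1 - \<rho>^2)^2 * \<mu>^2"
  proof -
    have s30: "0 < 8 * sqrt 30 * L^2" using L_pos by simp
    have "\<alpha> * (8 * sqrt 30 * L^2) \<le> (1 - \<rho>^2) * \<mu>"
      using alpha3 s30 unfolding \<rho>_def[symmetric] by (simp add: le_divide_eq)
    moreover have "0 \<le> \<alpha> * (8 * sqrt 30 * L^2)" using alpha_pos by simp
    ultimately have "(\<alpha> * (8 * sqrt 30 * L^2))^2 \<le> ((1 - \<rho>^2) * \<mu>)^2" by (rule power_mono)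
    moreover have "(\<alpha> * (8 * sqrt 30 * L^2))^2 = 1920 * \<alpha>^2 * L^4"
      by (simp add: power_mult_distrib power2_eq_square power4_eq_xxxx)
    ultimately show ?thesis by (simp add: power_mult_distrib)
  qed
  have gz: "(\<Sum>i\<in>UNIV. \<Sum>l<m. g i l xstar) = 0"
    by (rule grad_zero[OF m_pos grad lip L_pos xstar_min])
  interpret D: drr_setup W f g m \<mu> L \<alpha> xstar
    using m_pos grad mu_pos mu_le_L sconv lip W_sym W_stoch alpha_pos r1 a2' a3' gz
    unfolding \<rho>_def by unfold_locales auto
  define n where "n = real CARD('n)"
  define H0 where "H0 = (norm (avg_pt x0 - xstar))^2 + 16 * \<alpha> * L^2 / (n * \<mu> * (1 - \<rho>^2)) * consensus_err x0"
  define \<sigma>2 where "\<sigma>2 = (1 / (real m * n)) * (\<Sum>i\<in>UNIV. \<Sum>l<m. (norm (g i l xstar))^2)"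
  have main: "\<forall>t. (1 / n) * (\<Sum>i\<in>UNIV. expect_sched m t
                      (\<lambda>\<sigma>. (norm (drr_iter W \<alpha> g m \<sigma> x0 t i - xstar))^2))
               \<le> (1 - \<alpha> * \<mu> / 4) ^ (m * t) * H0
                 + 4 * \<alpha>^2 / \<mu> * (real m * L + 240 * \<rho>^2 * L^2 / (\<mu> * (1 - \<rho>^2)^2)) * \<sigma>2
                 + ((1 + \<rho>^2) / 2) ^ (m * t) * consensus_err x0 / n
                 + 4 * (30 * n * L^2 / (1 - \<rho>^2) * (H0 + 28 * (real m * \<mu> + L) * \<sigma>2 / (\<mu> * L^2))
                   + 15 * n * \<rho>^2 / (1 - \<rho>^2) * \<sigma>2
                   + real m * n * \<mu> * (1 - \<rho>^2) / (8 * L) * \<sigma>2) / (n * (1 - \<rho>^2)^2) * \<alpha>^2"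
  proof (intro allI)
    fix t
    have nn: "D.nn = n" unfolding D.nn_def n_def ..
    have rr: "D.r = \<rho>^2" unfolding D.r_def \<rho>_def ..
    have sg: "D.sig = \<sigma>2" unfolding D.sig_def D.M2_def \<sigma>2_def nn by (simp add: field_simps)
    have V0: "D.V0 x0 = H0" unfolding D.V0_def H0_def D.w_def nn rr by (simp add: field_simps)
    have H0: "H0 \<ge> 0" using D.V0_nonneg[of x0] unfolding V0 .
    have mb: "(1/n) * (\<Sum>i\<in>UNIV. expect_sched m t (\<lambda>\<sigma>::nat \<Rightarrow> 'n \<Rightarrow> nat \<Rightarrow> nat. (norm (drr_iter W \<alpha> g m \<sigma> x0 t i - xstar))^2))
       \<le> D.q^(m*t) * H0 + D.Nv + D.qc^(m*t) * (consensus_err x0 / n) + D.Kc (H0 + D.Nv)"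
      using D.main_bound[of t x0] unfolding nn V0 .
    have t1: "D.q^(m*t) * H0 \<le> (1 - \<alpha> * \<mu> / 4) ^ (m * t) * H0"
    proof (rule mult_right_mono[OF power_mono H0])
      show "D.q \<le> 1 - \<alpha> * \<mu> / 4" unfolding D.q_def using alpha_pos mu_pos by simp
      show "0 \<le> D.q" using D.q_bounds by simp
    qed
    have t2: "D.Nv \<le> 4 * \<alpha>^2 / \<mu> * (real m * L + 240 * \<rho>^2 * L^2 / (\<mu> * (1 - \<rho>^2)^2)) * \<sigma>2"
      using D.Nv_le unfolding rr sg .
    have t3: "D.qc^(m*t) * (consensus_err x0 / n) = ((1 + \<rho>^2) / 2) ^ (m * t) * consensus_err x0 / n"
      unfolding D.qc_def rr by simp
    have t4: "D.Kc (H0 + D.Nv) \<le> 4 * (30 * n * L^2 / (1 - \<rho>^2) * (H0 + 28 * (real m * \<mu> + L) * \<sigma>2 / (\<mu> * L^2))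
                   + 15 * n * \<rho>^2 / (1 - \<rho>^2) * \<sigma>2
                   + real m * n * \<mu> * (1 - \<rho>^2) / (8 * L) * \<sigma>2) / (n * (1 - \<rho>^2)^2) * \<alpha>^2"
      using D.Kc_le[OF H0] unfolding nn rr sg .
    show "(1 / n) * (\<Sum>i\<in>UNIV. expect_sched m t
                      (\<lambda>\<sigma>. (norm (drr_iter W \<alpha> g m \<sigma> x0 t i - xstar))^2))
               \<le> (1 - \<alpha> * \<mu> / 4) ^ (m * t) * H0
                 + 4 * \<alpha>^2 / \<mu> * (real m * L + 240 * \<rho>^2 * L^2 / (\<mu> * (1 - \<rho>^2)^2)) * \<sigma>2
                 + ((1 + \<rho>^2) / 2) ^ (m * t) * consensus_err x0 / n
                 + 4 * (30 * n * L^2 / (1 - \<rho>^2) * (H0 + 28 * (real m * \<mu> + L) * \<sigma>2 / (\<mu> * L^2))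
                   + 15 * n * \<rho>^2 / (1 - \<rho>^2) * \<sigma>2
                   + real m * n * \<mu> * (1 - \<rho>^2) / (8 * L) * \<sigma>2) / (n * (1 - \<rho>^2)^2) * \<alpha>^2"
      using mb t1 t2 t3 t4 by linarith
  qed
  show ?thesis
    unfolding Let_def n_def[symmetric] \<rho>_def[symmetric] H0_def[symmetric] \<sigma>2_def[symmetric]
    by (rule main)
qed


end
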